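(* Let $T$ be a ring and $\mathcal A$ a multiplicatively closed right Ore subset of regular elements of $T$ with $1\in\mathcal A$. Suppose there exists a right $T$-module $V$ such that the injective hull $E_{T\mathcal A^{-1}}(V\otimes_T T\mathcal A^{-1})$ is not locally Artinian as a $T\mathcal A^{-1}$-module. Then $E_T(V/\tau(V))$ is not a locally Artinian $T$-module, where $\tau(V)$ is the $\mathcal A$-torsion submodule of $V$.
   Context: A module is locally Artinian if every finitely generated submodule is Artinian. $\tau(V)=\{v\in V: va=0 \text{ for some } a\in\mathcal A\}$. *)

theory Defs
  imports "HOL-Algebra.Module"
begin

text \<open>We use the record type of HOL-Algebra modules, but read the scalar
  multiplication as a RIGHT action: the product v r of v \<in> M by r \<in> R
  is written ract M v r = smult M r v.  The fields mult/one of the record are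
  irrelevant and unused.\<close>

definition ract :: "('r, 'm, 'x) module_scheme \<Rightarrow> 'm \<Rightarrow> 'r \<Rightarrow> 'm" where
  "ract M v r = smult M r v"

definition right_module :: "('r, 'x) ring_scheme \<Rightarrow> ('r, 'm, 'y) module_scheme \<Rightarrow> bool" where
  "right_module R M \<longleftrightarrow> ring R \<and> abelian_group M \<and>
     (\<forall>v\<in>carrier M. \<forall>r\<in>carrier R. ract M v r \<in> carrier M) \<and>
     (\<forall>v\<in>carrier M. \<forall>w\<in>carrier M. \<forall>r\<in>carrier R.
        ract M (v \<oplus>\<^bsub>M\<^esub> w) r = ract M v r \<oplus>\<^bsub>M\<^esub> ract M w r) \<and>
     (\<forall>v\<in>carrier M. \<forall>r\<in>carrier R. \<forall>s\<in>carrier R.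
        ract M v (r \<oplus>\<^bsub>R\<^esub> s) = ract M v r \<oplus>\<^bsub>M\<^esub> ract M v s) \<and>
     (\<forall>v\<in>carrier M. \<forall>r\<in>carrier R. \<forall>s\<in>carrier R.
        ract M v (r \<otimes>\<^bsub>R\<^esub> s) = ract M (ract M v r) s) \<and>
     (\<forall>v\<in>carrier M. ract M v \<one>\<^bsub>R\<^esub> = v)"

definition submod :: "('r, 'x) ring_scheme \<Rightarrow> ('r, 'm, 'y) module_scheme \<Rightarrow> 'm set \<Rightarrow> bool" where
  "submod R M N \<longleftrightarrow> N \<subseteq> carrier M \<and> \<zero>\<^bsub>M\<^esub> \<in> N \<and>
     (\<forall>v\<in>N. \<forall>w\<in>N. v \<oplus>\<^bsub>M\<^esub> w \<in> N) \<and> (\<forall>v\<in>N. \<ominus>\<^bsub>M\<^esub> v \<in> N) \<and>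
     (\<forall>v\<in>N. \<forall>r\<in>carrier R. ract M v r \<in> N)"

definition gen_submod :: "('r, 'x) ring_scheme \<Rightarrow> ('r, 'm, 'y) module_scheme \<Rightarrow> 'm set \<Rightarrow> 'm set" where
  "gen_submod R M X = \<Inter> {N. submod R M N \<and> X \<subseteq> N}"

definition artinian_submod :: "('r, 'x) ring_scheme \<Rightarrow> ('r, 'm, 'y) module_scheme \<Rightarrow> 'm set \<Rightarrow> bool" where
  "artinian_submod R M N \<longleftrightarrow>
     (\<forall>f :: nat \<Rightarrow> 'm set. (\<forall>n. submod R M (f n) \<and> f n \<subseteq> N) \<and> (\<forall>n. f (Suc n) \<subseteq> f n)
        \<longrightarrow> (\<exists>n. \<forall>m\<ge>n. f m = f n))"

definition locally_artinian :: "('r, 'x) ring_scheme \<Rightarrow> ('r, 'm, 'y) module_scheme \<Rightarrow> bool" where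
  "locally_artinian R M \<longleftrightarrow>
     (\<forall>X. finite X \<and> X \<subseteq> carrier M \<longrightarrow> artinian_submod R M (gen_submod R M X))"

text \<open>Homomorphisms of right modules (only linearity is required of the source).\<close>
definition rhom :: "('r, 'x) ring_scheme \<Rightarrow> ('r, 'm, 'y) module_scheme \<Rightarrow> ('r, 'n, 'z) module_scheme
                    \<Rightarrow> ('m \<Rightarrow> 'n) \<Rightarrow> bool" where
  "rhom R M N f \<longleftrightarrow> f \<in> carrier M \<rightarrow> carrier N \<and>
     (\<forall>v\<in>carrier M. \<forall>w\<in>carrier M. f (v \<oplus>\<^bsub>M\<^esub> w) = f v \<oplus>\<^bsub>N\<^esub> f w) \<and>
     (\<forall>v\<in>carrier M. \<forall>r\<in>carrier R. f (ract M v r) = ract N (f v) r)"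

definition rreg :: "('r, 'x) ring_scheme \<Rightarrow> ('r, 'r) module" where
  "rreg R = \<lparr>carrier = carrier R, mult = mult R, one = one R, zero = zero R, add = add R,
             smult = (\<lambda>r v. v \<otimes>\<^bsub>R\<^esub> r)\<rparr>"

text \<open>Injective right module, via Baer's criterion: every homomorphism from a right
  ideal I of R into M extends to R, i.e. is left multiplication by some m \<in> M.\<close>
definition injective_mod :: "('r, 'x) ring_scheme \<Rightarrow> ('r, 'm, 'y) module_scheme \<Rightarrow> bool" where
  "injective_mod R M \<longleftrightarrow> right_module R M \<and>
     (\<forall>I f. submod R (rreg R) I \<and> f \<in> I \<rightarrow> carrier M \<and>
        (\<forall>x\<in>I. \<forall>y\<in>I. f (x \<oplus>\<^bsub>R\<^esub> y) = f x \<oplus>\<^bsub>M\<^esub> f y) \<and>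
        (\<forall>x\<in>I. \<forall>r\<in>carrier R. f (x \<otimes>\<^bsub>R\<^esub> r) = ract M (f x) r)
      \<longrightarrow> (\<exists>m\<in>carrier M. \<forall>x\<in>I. f x = ract M m x))"

definition essential :: "('r, 'x) ring_scheme \<Rightarrow> ('r, 'm, 'y) module_scheme \<Rightarrow> 'm set \<Rightarrow> bool" where
  "essential R M N \<longleftrightarrow> submod R M N \<and>
     (\<forall>K. submod R M K \<and> K \<noteq> {\<zero>\<^bsub>M\<^esub>} \<longrightarrow> K \<inter> N \<noteq> {\<zero>\<^bsub>M\<^esub>})"

text \<open>hull_via R M E f K: E is an injective hull of the quotient module M/K, the
  embedding M/K \<rightarrow> E being the map induced by f (f is a homomorphism with kernel
  exactly K, and its image is an essential submodule of the injective module E).\<close>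
definition hull_via :: "('r, 'x) ring_scheme \<Rightarrow> ('r, 'm, 'y) module_scheme \<Rightarrow> ('r, 'e, 'z) module_scheme
                        \<Rightarrow> ('m \<Rightarrow> 'e) \<Rightarrow> 'm set \<Rightarrow> bool" where
  "hull_via R M E f K \<longleftrightarrow> injective_mod R E \<and> rhom R M E f \<and>
     {v \<in> carrier M. f v = \<zero>\<^bsub>E\<^esub>} = K \<and> essential R E (f ` carrier M)"

definition regular_elem :: "('r, 'x) ring_scheme \<Rightarrow> 'r \<Rightarrow> bool" where
  "regular_elem R a \<longleftrightarrow> a \<in> carrier R \<and>
     (\<forall>x\<in>carrier R. (x \<otimes>\<^bsub>R\<^esub> a = \<zero>\<^bsub>R\<^esub> \<longrightarrow> x = \<zero>\<^bsub>R\<^esub>) \<and> (a \<otimes>\<^bsub>R\<^esub> x = \<zero>\<^bsub>R\<^esub> \<longrightarrow> x = \<zero>\<^bsub>R\<^esub>))"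

definition right_ore_set :: "('r, 'x) ring_scheme \<Rightarrow> 'r set \<Rightarrow> bool" where
  "right_ore_set R A \<longleftrightarrow> A \<subseteq> carrier R \<and> \<one>\<^bsub>R\<^esub> \<in> A \<and>
     (\<forall>a\<in>A. \<forall>b\<in>A. a \<otimes>\<^bsub>R\<^esub> b \<in> A) \<and> (\<forall>a\<in>A. regular_elem R a) \<and>
     (\<forall>t\<in>carrier R. \<forall>a\<in>A. \<exists>t'\<in>carrier R. \<exists>a'\<in>A. t \<otimes>\<^bsub>R\<^esub> a' = a \<otimes>\<^bsub>R\<^esub> t')"

definition right_ring_of_fractions :: "('r, 'x) ring_scheme \<Rightarrow> 'r set \<Rightarrow> ('s, 'y) ring_scheme
                                        \<Rightarrow> ('r \<Rightarrow> 's) \<Rightarrow> bool" where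
  "right_ring_of_fractions R A S \<phi> \<longleftrightarrow> ring S \<and> \<phi> \<in> ring_hom R S \<and>
     (\<forall>a\<in>A. \<phi> a \<in> Units S) \<and>
     (\<forall>s\<in>carrier S. \<exists>t\<in>carrier R. \<exists>a\<in>A. s = \<phi> t \<otimes>\<^bsub>S\<^esub> inv\<^bsub>S\<^esub> (\<phi> a)) \<and>
     {t \<in> carrier R. \<phi> t = \<zero>\<^bsub>S\<^esub>} = {t \<in> carrier R. \<exists>a\<in>A. t \<otimes>\<^bsub>R\<^esub> a = \<zero>\<^bsub>R\<^esub>}"

definition torsion :: "('r, 'x) ring_scheme \<Rightarrow> 'r set \<Rightarrow> ('r, 'm, 'y) module_scheme \<Rightarrow> 'm set" where
  "torsion R A V = {v \<in> carrier V. \<exists>a\<in>A. ract V v a = \<zero>\<^bsub>V\<^esub>}"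

definition formal_sums :: "('r, 'm, 'y) module_scheme \<Rightarrow> ('s, 'z) ring_scheme \<Rightarrow> ('m \<times> 's \<Rightarrow> int) set" where
  "formal_sums V S = {c. finite {p. c p \<noteq> 0} \<and> {p. c p \<noteq> 0} \<subseteq> carrier V \<times> carrier S}"

definition fs_add :: "('p \<Rightarrow> int) \<Rightarrow> ('p \<Rightarrow> int) \<Rightarrow> ('p \<Rightarrow> int)" where
  "fs_add c d = (\<lambda>p. c p + d p)"

definition fs_sub :: "('p \<Rightarrow> int) \<Rightarrow> ('p \<Rightarrow> int) \<Rightarrow> ('p \<Rightarrow> int)" where
  "fs_sub c d = (\<lambda>p. c p - d p)"

definition delta :: "'m \<times> 's \<Rightarrow> ('m \<times> 's \<Rightarrow> int)" where
  "delta p = (\<lambda>q. if q = p then 1 else 0)"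

definition tensor_gens :: "('r, 'x) ring_scheme \<Rightarrow> ('s, 'z) ring_scheme \<Rightarrow> ('r \<Rightarrow> 's)
                           \<Rightarrow> ('r, 'm, 'y) module_scheme \<Rightarrow> ('m \<times> 's \<Rightarrow> int) set" where
  "tensor_gens R S \<phi> V =
     {fs_sub (fs_sub (delta (v \<oplus>\<^bsub>V\<^esub> v', s)) (delta (v, s))) (delta (v', s)) | v v' s.
        v \<in> carrier V \<and> v' \<in> carrier V \<and> s \<in> carrier S} \<union>
     {fs_sub (fs_sub (delta (v, s \<oplus>\<^bsub>S\<^esub> s')) (delta (v, s))) (delta (v, s')) | v s s'.
        v \<in> carrier V \<and> s \<in> carrier S \<and> s' \<in> carrier S} \<union>
     {fs_sub (delta (ract V v t, s)) (delta (v, \<phi> t \<otimes>\<^bsub>S\<^esub> s)) | v t s.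
        v \<in> carrier V \<and> t \<in> carrier R \<and> s \<in> carrier S}"

inductive_set tensor_rel :: "('r, 'x) ring_scheme \<Rightarrow> ('s, 'z) ring_scheme \<Rightarrow> ('r \<Rightarrow> 's)
                             \<Rightarrow> ('r, 'm, 'y) module_scheme \<Rightarrow> ('m \<times> 's \<Rightarrow> int) set"
  for R S \<phi> V where
    zero: "(\<lambda>_. 0) \<in> tensor_rel R S \<phi> V"
  | plus: "c \<in> tensor_rel R S \<phi> V \<Longrightarrow> g \<in> tensor_gens R S \<phi> V \<Longrightarrow> fs_add c g \<in> tensor_rel R S \<phi> V"
  | minus: "c \<in> tensor_rel R S \<phi> V \<Longrightarrow> g \<in> tensor_gens R S \<phi> V \<Longrightarrow> fs_sub c g \<in> tensor_rel R S \<phi> V"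

text \<open>Right S-action on formal sums: (v, s) \<cdot> s' = (v, s s').\<close>
definition fs_act :: "('s, 'z) ring_scheme \<Rightarrow> ('m \<times> 's \<Rightarrow> int) \<Rightarrow> 's \<Rightarrow> ('m \<times> 's \<Rightarrow> int)" where
  "fs_act S c s' = (\<lambda>(v, u). \<Sum>s\<in>{s. c (v, s) \<noteq> 0 \<and> s \<otimes>\<^bsub>S\<^esub> s' = u}. c (v, s))"

text \<open>The free right S-module of formal sums; V \<otimes>_R S is its quotient by tensor_rel.\<close>
definition tensor_free :: "('r, 'x) ring_scheme \<Rightarrow> ('s, 'z) ring_scheme \<Rightarrow> ('r \<Rightarrow> 's)
                           \<Rightarrow> ('r, 'm, 'y) module_scheme \<Rightarrow> ('s, 'm \<times> 's \<Rightarrow> int) module" where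
  "tensor_free R S \<phi> V = \<lparr>carrier = formal_sums V S, mult = (\<lambda>c d. c), one = (\<lambda>_. 0),
      zero = (\<lambda>_. 0), add = fs_add, smult = (\<lambda>s c. fs_act S c s)\<rparr>"

end

theory Submission
  imports Defs
begin

lemma ag_minus_zero: assumes "abelian_group G" "x \<in> carrier G" "y \<in> carrier G" "x \<ominus>\<^bsub>G\<^esub> y = \<zero>\<^bsub>G\<^esub>"
  shows "x = y"
proof -
  have "\<ominus>\<^bsub>G\<^esub> (\<ominus>\<^bsub>G\<^esub> y) = x" using assms
    by (intro abelian_group.minus_equality) (auto simp: a_minus_def abelian_group.a_inv_closed)
  then show ?thesis using assms by (simp add: abelian_group.minus_minus)
qed

locale rmod =
  fixes R :: "('r,'x) ring_scheme" and M :: "('r,'m,'y) module_scheme"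
  assumes rm: "right_module R M"
begin

lemma ringR: "ring R" using rm unfolding right_module_def by auto
lemma agM: "abelian_group M" using rm unfolding right_module_def by auto

sublocale R: ring R by (rule ringR)
sublocale M: abelian_group M by (rule agM)

lemma ract_closed[simp,intro]: "v \<in> carrier M \<Longrightarrow> r \<in> carrier R \<Longrightarrow> ract M v r \<in> carrier M"
  using rm unfolding right_module_def by auto
lemma ract_add_l: "v \<in> carrier M \<Longrightarrow> w \<in> carrier M \<Longrightarrow> r \<in> carrier R \<Longrightarrow>
   ract M (v \<oplus>\<^bsub>M\<^esub> w) r = ract M v r \<oplus>\<^bsub>M\<^esub> ract M w r"
  using rm unfolding right_module_def by auto
lemma ract_add_r: "v \<in> carrier M \<Longrightarrow> r \<in> carrier R \<Longrightarrow> s \<in> carrier R \<Longrightarrow>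
   ract M v (r \<oplus>\<^bsub>R\<^esub> s) = ract M v r \<oplus>\<^bsub>M\<^esub> ract M v s"
  using rm unfolding right_module_def by auto
lemma ract_mult: "v \<in> carrier M \<Longrightarrow> r \<in> carrier R \<Longrightarrow> s \<in> carrier R \<Longrightarrow>
   ract M v (r \<otimes>\<^bsub>R\<^esub> s) = ract M (ract M v r) s"
  using rm unfolding right_module_def by auto
lemma ract_one[simp]: "v \<in> carrier M \<Longrightarrow> ract M v \<one>\<^bsub>R\<^esub> = v"
  using rm unfolding right_module_def by auto

lemma idem_zero: "x \<in> carrier M \<Longrightarrow> x \<oplus>\<^bsub>M\<^esub> x = x \<Longrightarrow> x = \<zero>\<^bsub>M\<^esub>"
  using M.add.l_cancel_one by blast

lemma ract_zero_r[simp]: "v \<in> carrier M \<Longrightarrow> ract M v \<zero>\<^bsub>R\<^esub> = \<zero>\<^bsub>M\<^esub>"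
  by (rule idem_zero) (auto simp: ract_add_r[symmetric])
lemma ract_zero_l[simp]: "r \<in> carrier R \<Longrightarrow> ract M \<zero>\<^bsub>M\<^esub> r = \<zero>\<^bsub>M\<^esub>"
  by (rule idem_zero) (auto simp: ract_add_l[symmetric])
lemma ract_neg_l: "v \<in> carrier M \<Longrightarrow> r \<in> carrier R \<Longrightarrow> ract M (\<ominus>\<^bsub>M\<^esub> v) r = \<ominus>\<^bsub>M\<^esub> ract M v r"
proof -
  assume a: "v \<in> carrier M" "r \<in> carrier R"
  have "ract M (\<ominus>\<^bsub>M\<^esub> v) r \<oplus>\<^bsub>M\<^esub> ract M v r = \<zero>\<^bsub>M\<^esub>"
    using a by (simp add: ract_add_l[symmetric] M.l_neg)
  then show ?thesis using a by (intro M.minus_equality[symmetric]) auto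
qed
lemma ract_neg_r: "v \<in> carrier M \<Longrightarrow> r \<in> carrier R \<Longrightarrow> ract M v (\<ominus>\<^bsub>R\<^esub> r) = \<ominus>\<^bsub>M\<^esub> ract M v r"
proof -
  assume a: "v \<in> carrier M" "r \<in> carrier R"
  have "ract M v (\<ominus>\<^bsub>R\<^esub> r) \<oplus>\<^bsub>M\<^esub> ract M v r = \<zero>\<^bsub>M\<^esub>"
    using a by (simp add: ract_add_r[symmetric] R.l_neg)
  then show ?thesis using a by (intro M.minus_equality[symmetric]) auto
qed
lemma ract_minus_l: "v \<in> carrier M \<Longrightarrow> w \<in> carrier M \<Longrightarrow> r \<in> carrier R \<Longrightarrow>
   ract M (v \<ominus>\<^bsub>M\<^esub> w) r = ract M v r \<ominus>\<^bsub>M\<^esub> ract M w r"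
  by (simp add: a_minus_def ract_add_l ract_neg_l)
lemma ract_minus_r: "v \<in> carrier M \<Longrightarrow> r \<in> carrier R \<Longrightarrow> s \<in> carrier R \<Longrightarrow>
   ract M v (r \<ominus>\<^bsub>R\<^esub> s) = ract M v r \<ominus>\<^bsub>M\<^esub> ract M v s"
  by (simp add: a_minus_def ract_add_r ract_neg_r)

lemma carrier_submod: "submod R M (carrier M)"
  unfolding submod_def by auto

lemma submod_Inter: "\<F> \<noteq> {} \<Longrightarrow> (\<And>N. N \<in> \<F> \<Longrightarrow> submod R M N) \<Longrightarrow> submod R M (\<Inter>\<F>)"
  unfolding submod_def by blast

lemma gen_submod_submod: "X \<subseteq> carrier M \<Longrightarrow> submod R M (gen_submod R M X)"
  unfolding gen_submod_def by (rule submod_Inter) (use carrier_submod in auto)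
lemma gen_submod_incl: "X \<subseteq> carrier M \<Longrightarrow> X \<subseteq> gen_submod R M X"
  unfolding gen_submod_def using carrier_submod by auto
lemma gen_submod_least: "submod R M N \<Longrightarrow> X \<subseteq> N \<Longrightarrow> gen_submod R M X \<subseteq> N"
  unfolding gen_submod_def by auto

lemma submod_minus: "submod R M N \<Longrightarrow> x \<in> N \<Longrightarrow> y \<in> N \<Longrightarrow> x \<ominus>\<^bsub>M\<^esub> y \<in> N"
  unfolding submod_def a_minus_def by auto

end

lemma submodD:
  assumes "submod R M N"
  shows "N \<subseteq> carrier M" "\<zero>\<^bsub>M\<^esub> \<in> N" "\<And>v w. v \<in> N \<Longrightarrow> w \<in> N \<Longrightarrow> v \<oplus>\<^bsub>M\<^esub> w \<in> N"
    "\<And>v. v \<in> N \<Longrightarrow> \<ominus>\<^bsub>M\<^esub> v \<in> N" "\<And>v r. v \<in> N \<Longrightarrow> r \<in> carrier R \<Longrightarrow> ract M v r \<in> N"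
  using assms unfolding submod_def by auto

definition restr :: "('s,'x) ring_scheme \<Rightarrow> ('r \<Rightarrow> 's) \<Rightarrow> ('s,'e,'y) module_scheme \<Rightarrow> ('r,'e) module" where
 "restr S \<phi> E = \<lparr>carrier = carrier E, mult = mult E, one = one E, zero = zero E, add = add E,
     smult = (\<lambda>r v. smult E (\<phi> r) v)\<rparr>"

lemma restr_simps[simp]: "carrier (restr S \<phi> E) = carrier E" "zero (restr S \<phi> E) = zero E"
  "add (restr S \<phi> E) = add E" "ract (restr S \<phi> E) v r = ract E v (\<phi> r)"
  by (auto simp: restr_def ract_def)
lemma restr_inv[simp]: "a_inv (restr S \<phi> E) = a_inv E"
  by (rule ext) (simp add: restr_def a_inv_def m_inv_def)
lemma restr_minus[simp]: "a_minus (restr S \<phi> E) = a_minus E"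
  by (auto simp: a_minus_def fun_eq_iff)

locale setting =
  fixes T :: "'r ring" and A :: "'r set"
    and S :: "'s ring" and \<phi> :: "'r \<Rightarrow> 's"
    and V :: "('r, 'v) module"
    and E :: "('s, 'e) module" and \<beta> :: "('v \<times> 's \<Rightarrow> int) \<Rightarrow> 'e"
    and E' :: "('r, 'f) module" and g :: "'v \<Rightarrow> 'f"
  assumes ringT: "ring T"
    and ore: "right_ore_set T A"
    and frac: "right_ring_of_fractions T A S \<phi>"
    and modV: "right_module T V"
    and hullE: "hull_via S (tensor_free T S \<phi> V) E \<beta> (tensor_rel T S \<phi> V)"
    and hullE': "hull_via T V E' g (torsion T A V)"
begin

lemma injE: "injective_mod S E" using hullE unfolding hull_via_def by auto
lemma injE': "injective_mod T E'" using hullE' unfolding hull_via_def by auto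
lemma modE: "right_module S E" using injE unfolding injective_mod_def by auto
lemma modE': "right_module T E'" using injE' unfolding injective_mod_def by auto

sublocale V: rmod T V by (unfold_locales) (rule modV)
sublocale E: rmod S E by (unfold_locales) (rule modE)
sublocale E': rmod T E' by (unfold_locales) (rule modE')

lemma ringS: "ring S" using frac unfolding right_ring_of_fractions_def by blast
lemma phi_hom: "\<phi> \<in> ring_hom T S" using frac unfolding right_ring_of_fractions_def by blast

lemma phi_closed[simp]: "t \<in> carrier T \<Longrightarrow> \<phi> t \<in> carrier S" using phi_hom by (rule ring_hom_closed)
lemma phi_mult: "t \<in> carrier T \<Longrightarrow> u \<in> carrier T \<Longrightarrow> \<phi> (t \<otimes>\<^bsub>T\<^esub> u) = \<phi> t \<otimes>\<^bsub>S\<^esub> \<phi> u"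
  using phi_hom by (rule ring_hom_mult)
lemma phi_add: "t \<in> carrier T \<Longrightarrow> u \<in> carrier T \<Longrightarrow> \<phi> (t \<oplus>\<^bsub>T\<^esub> u) = \<phi> t \<oplus>\<^bsub>S\<^esub> \<phi> u"
  using phi_hom by (rule ring_hom_add)
lemma phi_one[simp]: "\<phi> \<one>\<^bsub>T\<^esub> = \<one>\<^bsub>S\<^esub>"
  using phi_hom by (rule ring_hom_one)

lemma A_sub: "A \<subseteq> carrier T" using ore unfolding right_ore_set_def by auto
lemma A_one: "\<one>\<^bsub>T\<^esub> \<in> A" using ore unfolding right_ore_set_def by auto
lemma A_mult: "a \<in> A \<Longrightarrow> b \<in> A \<Longrightarrow> a \<otimes>\<^bsub>T\<^esub> b \<in> A" using ore unfolding right_ore_set_def by auto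
lemma A_reg: "a \<in> A \<Longrightarrow> regular_elem T a" using ore unfolding right_ore_set_def by auto
lemma A_ore: "t \<in> carrier T \<Longrightarrow> a \<in> A \<Longrightarrow> \<exists>t'\<in>carrier T. \<exists>a'\<in>A. t \<otimes>\<^bsub>T\<^esub> a' = a \<otimes>\<^bsub>T\<^esub> t'"
  using ore unfolding right_ore_set_def by auto
lemma A_carr[simp]: "a \<in> A \<Longrightarrow> a \<in> carrier T" using A_sub by auto

lemma common_mult: assumes "a \<in> A" "b \<in> A"
  obtains x y c where "x \<in> carrier T" "y \<in> carrier T" "c \<in> A" "c = a \<otimes>\<^bsub>T\<^esub> x" "c = b \<otimes>\<^bsub>T\<^esub> y"
proof -
  obtain t' a' where "t' \<in> carrier T" "a' \<in> A" "b \<otimes>\<^bsub>T\<^esub> a' = a \<otimes>\<^bsub>T\<^esub> t'"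
    using A_ore[of b a] assms by auto
  moreover have "b \<otimes>\<^bsub>T\<^esub> a' \<in> A" using A_mult assms \<open>a' \<in> A\<close> by blast
  ultimately show ?thesis by (intro that[of t' a' "b \<otimes>\<^bsub>T\<^esub> a'"]) auto
qed

lemma phi_unit: "a \<in> A \<Longrightarrow> \<phi> a \<in> Units S"
  using frac unfolding right_ring_of_fractions_def by auto
lemma S_frac: "s \<in> carrier S \<Longrightarrow> \<exists>t\<in>carrier T. \<exists>a\<in>A. s = \<phi> t \<otimes>\<^bsub>S\<^esub> inv\<^bsub>S\<^esub> (\<phi> a)"
  using frac unfolding right_ring_of_fractions_def by auto
lemma phi_ker: "t \<in> carrier T \<Longrightarrow> \<phi> t = \<zero>\<^bsub>S\<^esub> \<Longrightarrow> \<exists>a\<in>A. t \<otimes>\<^bsub>T\<^esub> a = \<zero>\<^bsub>T\<^esub>"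
  using frac unfolding right_ring_of_fractions_def by blast

lemma g_rhom: "rhom T V E' g" using hullE' unfolding hull_via_def by auto
lemma g_closed[simp]: "v \<in> carrier V \<Longrightarrow> g v \<in> carrier E'" using g_rhom unfolding rhom_def by auto
lemma g_add: "v \<in> carrier V \<Longrightarrow> w \<in> carrier V \<Longrightarrow> g (v \<oplus>\<^bsub>V\<^esub> w) = g v \<oplus>\<^bsub>E'\<^esub> g w"
  using g_rhom unfolding rhom_def by auto
lemma g_ract: "v \<in> carrier V \<Longrightarrow> r \<in> carrier T \<Longrightarrow> g (ract V v r) = ract E' (g v) r"
  using g_rhom unfolding rhom_def by auto
lemma g_ker: "v \<in> carrier V \<Longrightarrow> g v = \<zero>\<^bsub>E'\<^esub> \<longleftrightarrow> v \<in> torsion T A V"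
  using hullE' unfolding hull_via_def by auto
lemma ess_E': "essential T E' (g ` carrier V)" using hullE' unfolding hull_via_def by auto

lemma ess_get: assumes "essential R M N" "submod R M K" "x \<in> K" "x \<noteq> \<zero>\<^bsub>M\<^esub>"
  obtains y where "y \<in> K" "y \<in> N" "y \<noteq> \<zero>\<^bsub>M\<^esub>"
proof -
  have "K \<noteq> {\<zero>\<^bsub>M\<^esub>}" using assms by auto
  then have "K \<inter> N \<noteq> {\<zero>\<^bsub>M\<^esub>}" using assms unfolding essential_def by auto
  moreover have "\<zero>\<^bsub>M\<^esub> \<in> K \<inter> N" using assms unfolding essential_def submod_def by auto
  ultimately show ?thesis using that by blast
qed

lemma torsion_free:
  assumes e: "e \<in> carrier E'" and a: "a \<in> A" and ea: "ract E' e a = \<zero>\<^bsub>E'\<^esub>"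
  shows "e = \<zero>\<^bsub>E'\<^esub>"
proof (rule ccontr)
  assume ne: "e \<noteq> \<zero>\<^bsub>E'\<^esub>"
  define K where "K = {ract E' e r | r. r \<in> carrier T}"
  have sK: "submod T E' K"
    unfolding submod_def K_def
  proof (intro conjI ballI)
    show "\<zero>\<^bsub>E'\<^esub> \<in> {ract E' e r |r. r \<in> carrier T}"
      using e by (intro CollectI exI[of _ "\<zero>\<^bsub>T\<^esub>"]) auto
  next
    fix v w assume "v \<in> {ract E' e r |r. r \<in> carrier T}" "w \<in> {ract E' e r |r. r \<in> carrier T}"
    then obtain r r' where "v = ract E' e r" "w = ract E' e r'" "r \<in> carrier T" "r' \<in> carrier T" by auto
    then show "v \<oplus>\<^bsub>E'\<^esub> w \<in> {ract E' e r |r. r \<in> carrier T}"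
      using e by (intro CollectI exI[of _ "r \<oplus>\<^bsub>T\<^esub> r'"]) (auto simp: E'.ract_add_r)
  next
    fix v assume "v \<in> {ract E' e r |r. r \<in> carrier T}"
    then obtain r where "v = ract E' e r" "r \<in> carrier T" by auto
    then show "\<ominus>\<^bsub>E'\<^esub> v \<in> {ract E' e r |r. r \<in> carrier T}"
      using e by (intro CollectI exI[of _ "\<ominus>\<^bsub>T\<^esub> r"]) (auto simp: E'.ract_neg_r)
  next
    fix v s assume "v \<in> {ract E' e r |r. r \<in> carrier T}" "s \<in> carrier T"
    then obtain r where "v = ract E' e r" "r \<in> carrier T" by auto
    then show "ract E' v s \<in> {ract E' e r |r. r \<in> carrier T}"
      using e \<open>s \<in> carrier T\<close> by (intro CollectI exI[of _ "r \<otimes>\<^bsub>T\<^esub> s"]) (auto simp: E'.ract_mult)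
  qed (use e in auto)
  have "e \<in> K" unfolding K_def using e by (intro CollectI exI[of _ "\<one>\<^bsub>T\<^esub>"]) auto
  then obtain y where "y \<in> K" "y \<in> g ` carrier V" "y \<noteq> \<zero>\<^bsub>E'\<^esub>"
    using ess_get[OF ess_E' sK _ ne] by blast
  then obtain r v where r: "r \<in> carrier T" and v: "v \<in> carrier V" and yr: "y = ract E' e r" and yv: "y = g v"
    unfolding K_def by auto
  obtain t' a' where t': "t' \<in> carrier T" and a': "a' \<in> A" and ore': "r \<otimes>\<^bsub>T\<^esub> a' = a \<otimes>\<^bsub>T\<^esub> t'"
    using A_ore[OF r a] by auto
  have "g (ract V v a') = ract E' (ract E' e r) a'" using yr yv v a' by (simp add: g_ract)
  also have "\<dots> = ract E' e (a \<otimes>\<^bsub>T\<^esub> t')" using e r a' by (simp add: E'.ract_mult[symmetric] ore')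
  also have "\<dots> = \<zero>\<^bsub>E'\<^esub>" using e a t' ea by (simp add: E'.ract_mult)
  finally have "ract V v a' \<in> torsion T A V" using g_ker v a' by auto
  then obtain b where b: "b \<in> A" "ract V (ract V v a') b = \<zero>\<^bsub>V\<^esub>" unfolding torsion_def by auto
  then have "ract V v (a' \<otimes>\<^bsub>T\<^esub> b) = \<zero>\<^bsub>V\<^esub>" using v a' by (simp add: V.ract_mult)
  then have "v \<in> torsion T A V" unfolding torsion_def using v A_mult[OF a' b(1)] by auto
  then have "g v = \<zero>\<^bsub>E'\<^esub>" using g_ker v by auto
  with yv \<open>y \<noteq> \<zero>\<^bsub>E'\<^esub>\<close> show False by simp
qed

end

lemma rreg_simps[simp]: "carrier (rreg R) = carrier R" "zero (rreg R) = zero R"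
  "add (rreg R) = add R" "ract (rreg R) v r = v \<otimes>\<^bsub>R\<^esub> r"
  by (auto simp: rreg_def ract_def)
lemma rreg_inv[simp]: "a_inv (rreg R) = a_inv R"
  by (rule ext) (simp add: rreg_def a_inv_def m_inv_def)

context setting begin

lemma reg_cancel: assumes "a \<in> A" "r \<in> carrier T" "r' \<in> carrier T" "a \<otimes>\<^bsub>T\<^esub> r = a \<otimes>\<^bsub>T\<^esub> r'"
  shows "r = r'"
proof -
  have "a \<otimes>\<^bsub>T\<^esub> (r \<ominus>\<^bsub>T\<^esub> r') = a \<otimes>\<^bsub>T\<^esub> r \<oplus>\<^bsub>T\<^esub> a \<otimes>\<^bsub>T\<^esub> (\<ominus>\<^bsub>T\<^esub> r')"
    unfolding a_minus_def using assms by (intro V.R.r_distr) auto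
  also have "\<dots> = a \<otimes>\<^bsub>T\<^esub> r' \<oplus>\<^bsub>T\<^esub> \<ominus>\<^bsub>T\<^esub> (a \<otimes>\<^bsub>T\<^esub> r')"
    using assms by (simp only: V.R.r_minus A_carr)
  also have "\<dots> = \<zero>\<^bsub>T\<^esub>" using assms by (intro V.R.r_neg) auto
  finally have "a \<otimes>\<^bsub>T\<^esub> (r \<ominus>\<^bsub>T\<^esub> r') = \<zero>\<^bsub>T\<^esub>" .
  moreover have "r \<ominus>\<^bsub>T\<^esub> r' \<in> carrier T" using assms by (intro V.R.minus_closed) auto
  moreover have "\<forall>x\<in>carrier T. a \<otimes>\<^bsub>T\<^esub> x = \<zero>\<^bsub>T\<^esub> \<longrightarrow> x = \<zero>\<^bsub>T\<^esub>"
    using A_reg[OF assms(1)] unfolding regular_elem_def by blast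
  ultimately have "r \<ominus>\<^bsub>T\<^esub> r' = \<zero>\<^bsub>T\<^esub>" by blast
  then show ?thesis using assms ag_minus_zero[OF V.R.abelian_group_axioms] by blast
qed

lemma divisible:
  assumes e: "e \<in> carrier E'" and a: "a \<in> A"
  shows "\<exists>y\<in>carrier E'. ract E' y a = e"
proof -
  define I where "I = {a \<otimes>\<^bsub>T\<^esub> r | r. r \<in> carrier T}"
  define f where "f x = (THE y. \<exists>r\<in>carrier T. x = a \<otimes>\<^bsub>T\<^esub> r \<and> y = ract E' e r)" for x
  have feq: "f (a \<otimes>\<^bsub>T\<^esub> r) = ract E' e r" if r: "r \<in> carrier T" for r
    unfolding f_def
  proof (rule the_equality)
    show "\<exists>r'\<in>carrier T. a \<otimes>\<^bsub>T\<^esub> r = a \<otimes>\<^bsub>T\<^esub> r' \<and> ract E' e r = ract E' e r'" using r by auto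
  next
    fix y assume "\<exists>r'\<in>carrier T. a \<otimes>\<^bsub>T\<^esub> r = a \<otimes>\<^bsub>T\<^esub> r' \<and> y = ract E' e r'"
    then obtain r' where "r' \<in> carrier T" "a \<otimes>\<^bsub>T\<^esub> r = a \<otimes>\<^bsub>T\<^esub> r'" "y = ract E' e r'" by auto
    then show "y = ract E' e r" using reg_cancel[OF a r] by auto
  qed
  have sI: "submod T (rreg T) I"
    unfolding submod_def I_def
  proof (intro conjI ballI)
    show "\<zero>\<^bsub>rreg T\<^esub> \<in> {a \<otimes>\<^bsub>T\<^esub> r |r. r \<in> carrier T}"
      using a by (intro CollectI exI[of _ "\<zero>\<^bsub>T\<^esub>"]) auto
  next
    fix v w assume "v \<in> {a \<otimes>\<^bsub>T\<^esub> r |r. r \<in> carrier T}" "w \<in> {a \<otimes>\<^bsub>T\<^esub> r |r. r \<in> carrier T}"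
    then obtain r r' where "v = a \<otimes>\<^bsub>T\<^esub> r" "w = a \<otimes>\<^bsub>T\<^esub> r'" "r \<in> carrier T" "r' \<in> carrier T" by auto
    then show "v \<oplus>\<^bsub>rreg T\<^esub> w \<in> {a \<otimes>\<^bsub>T\<^esub> r |r. r \<in> carrier T}"
      using a by (intro CollectI exI[of _ "r \<oplus>\<^bsub>T\<^esub> r'"]) (auto simp: V.R.r_distr)
  next
    fix v assume "v \<in> {a \<otimes>\<^bsub>T\<^esub> r |r. r \<in> carrier T}"
    then obtain r where "v = a \<otimes>\<^bsub>T\<^esub> r" "r \<in> carrier T" by auto
    then show "\<ominus>\<^bsub>rreg T\<^esub> v \<in> {a \<otimes>\<^bsub>T\<^esub> r |r. r \<in> carrier T}"
      using a by (intro CollectI exI[of _ "\<ominus>\<^bsub>T\<^esub> r"]) (auto simp: V.R.r_minus)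
  next
    fix v s assume "v \<in> {a \<otimes>\<^bsub>T\<^esub> r |r. r \<in> carrier T}" "s \<in> carrier T"
    then obtain r where "v = a \<otimes>\<^bsub>T\<^esub> r" "r \<in> carrier T" by auto
    then show "ract (rreg T) v s \<in> {a \<otimes>\<^bsub>T\<^esub> r |r. r \<in> carrier T}"
      using a \<open>s \<in> carrier T\<close> by (intro CollectI exI[of _ "r \<otimes>\<^bsub>T\<^esub> s"]) (auto simp: V.R.m_assoc)
  qed (use a in auto)
  have "\<exists>m\<in>carrier E'. \<forall>x\<in>I. f x = ract E' m x"
    using injE' unfolding injective_mod_def
  proof (elim conjE allE impE)
    show "submod T (rreg T) I \<and> f \<in> I \<rightarrow> carrier E' \<and>
      (\<forall>x\<in>I. \<forall>y\<in>I. f (x \<oplus>\<^bsub>T\<^esub> y) = f x \<oplus>\<^bsub>E'\<^esub> f y) \<and>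
      (\<forall>x\<in>I. \<forall>r\<in>carrier T. f (x \<otimes>\<^bsub>T\<^esub> r) = ract E' (f x) r)"
    proof (intro conjI ballI funcsetI sI)
      fix x assume "x \<in> I" then show "f x \<in> carrier E'" unfolding I_def using feq e by auto
    next
      fix x y assume "x \<in> I" "y \<in> I"
      then obtain r r' where "x = a \<otimes>\<^bsub>T\<^esub> r" "y = a \<otimes>\<^bsub>T\<^esub> r'" "r \<in> carrier T" "r' \<in> carrier T"
        unfolding I_def by auto
      then show "f (x \<oplus>\<^bsub>T\<^esub> y) = f x \<oplus>\<^bsub>E'\<^esub> f y"
        using a e by (simp add: V.R.r_distr[symmetric] feq E'.ract_add_r)
    next
      fix x r assume "x \<in> I" "r \<in> carrier T"
      then obtain r' where "x = a \<otimes>\<^bsub>T\<^esub> r'" "r' \<in> carrier T"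
        unfolding I_def by auto
      then show "f (x \<otimes>\<^bsub>T\<^esub> r) = ract E' (f x) r"
        using a e \<open>r \<in> carrier T\<close> by (simp add: V.R.m_assoc feq E'.ract_mult)
    qed
  qed auto
  then obtain m where m: "m \<in> carrier E'" "\<forall>x\<in>I. f x = ract E' m x" by auto
  have "a \<in> I" unfolding I_def using a by (intro CollectI exI[of _ "\<one>\<^bsub>T\<^esub>"]) auto
  then have "ract E' m a = f (a \<otimes>\<^bsub>T\<^esub> \<one>\<^bsub>T\<^esub>)" using m a by auto
  also have "\<dots> = e" using feq e by auto
  finally show ?thesis using m by auto
qed

end

context setting begin

lemma phi_neg: "t \<in> carrier T \<Longrightarrow> \<phi> (\<ominus>\<^bsub>T\<^esub> t) = \<ominus>\<^bsub>S\<^esub> \<phi> t"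
proof -
  assume t: "t \<in> carrier T"
  have "\<phi> (\<ominus>\<^bsub>T\<^esub> t) \<oplus>\<^bsub>S\<^esub> \<phi> t = \<zero>\<^bsub>S\<^esub>"
    using t by (simp add: phi_add[symmetric] V.R.l_neg ring_hom_zero[OF phi_hom ringT ringS])
  then show ?thesis using t by (intro E.R.minus_equality[symmetric]) auto
qed
lemma phi_minus: "t \<in> carrier T \<Longrightarrow> u \<in> carrier T \<Longrightarrow> \<phi> (t \<ominus>\<^bsub>T\<^esub> u) = \<phi> t \<ominus>\<^bsub>S\<^esub> \<phi> u"
  by (simp add: a_minus_def phi_add phi_neg)

lemma inv_closed[simp]: "a \<in> A \<Longrightarrow> inv\<^bsub>S\<^esub> (\<phi> a) \<in> carrier S"
  using phi_unit by (simp add: E.R.Units_inv_closed)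
lemma inv_r: "a \<in> A \<Longrightarrow> \<phi> a \<otimes>\<^bsub>S\<^esub> inv\<^bsub>S\<^esub> (\<phi> a) = \<one>\<^bsub>S\<^esub>"
  using phi_unit by (simp add: E.R.Units_r_inv)
lemma inv_l: "a \<in> A \<Longrightarrow> inv\<^bsub>S\<^esub> (\<phi> a) \<otimes>\<^bsub>S\<^esub> \<phi> a = \<one>\<^bsub>S\<^esub>"
  using phi_unit by (simp add: E.R.Units_l_inv)

lemma frac_times_den: "t \<in> carrier T \<Longrightarrow> a \<in> A \<Longrightarrow> (\<phi> t \<otimes>\<^bsub>S\<^esub> inv\<^bsub>S\<^esub> (\<phi> a)) \<otimes>\<^bsub>S\<^esub> \<phi> a = \<phi> t"
  by (simp add: E.R.m_assoc inv_l)

lemma div_den: "x \<in> carrier S \<Longrightarrow> y \<in> carrier S \<Longrightarrow> b \<in> A \<Longrightarrow> x \<otimes>\<^bsub>S\<^esub> \<phi> b = y \<Longrightarrow> x = y \<otimes>\<^bsub>S\<^esub> inv\<^bsub>S\<^esub> (\<phi> b)"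
proof -
  assume a: "x \<in> carrier S" "y \<in> carrier S" "b \<in> A" "x \<otimes>\<^bsub>S\<^esub> \<phi> b = y"
  have "y \<otimes>\<^bsub>S\<^esub> inv\<^bsub>S\<^esub> (\<phi> b) = x \<otimes>\<^bsub>S\<^esub> (\<phi> b \<otimes>\<^bsub>S\<^esub> inv\<^bsub>S\<^esub> (\<phi> b))"
    unfolding a(4)[symmetric] by (rule E.R.m_assoc) (use a in auto)
  then show ?thesis using a by (simp add: inv_r)
qed

lemma rebase: assumes "t \<in> carrier T" "a \<in> A" "u \<in> carrier T" "b \<in> A" "b = a \<otimes>\<^bsub>T\<^esub> u"
  shows "\<phi> t \<otimes>\<^bsub>S\<^esub> inv\<^bsub>S\<^esub> (\<phi> a) = \<phi> (t \<otimes>\<^bsub>T\<^esub> u) \<otimes>\<^bsub>S\<^esub> inv\<^bsub>S\<^esub> (\<phi> b)"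
proof (rule div_den)
  have "(\<phi> t \<otimes>\<^bsub>S\<^esub> inv\<^bsub>S\<^esub> (\<phi> a)) \<otimes>\<^bsub>S\<^esub> \<phi> b = ((\<phi> t \<otimes>\<^bsub>S\<^esub> inv\<^bsub>S\<^esub> (\<phi> a)) \<otimes>\<^bsub>S\<^esub> \<phi> a) \<otimes>\<^bsub>S\<^esub> \<phi> u"
    using assms by (simp add: phi_mult E.R.m_assoc)
  also have "\<dots> = \<phi> (t \<otimes>\<^bsub>T\<^esub> u)" using assms by (simp add: frac_times_den phi_mult)
  finally show "(\<phi> t \<otimes>\<^bsub>S\<^esub> inv\<^bsub>S\<^esub> (\<phi> a)) \<otimes>\<^bsub>S\<^esub> \<phi> b = \<phi> (t \<otimes>\<^bsub>T\<^esub> u)" .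
qed (use assms in auto)

lemma E'_minus_zero: "x \<in> carrier E' \<Longrightarrow> y \<in> carrier E' \<Longrightarrow> x \<ominus>\<^bsub>E'\<^esub> y = \<zero>\<^bsub>E'\<^esub> \<Longrightarrow> x = y"
  using ag_minus_zero[OF E'.M.abelian_group_axioms] by blast
lemma T_minus_zero: "x \<in> carrier T \<Longrightarrow> y \<in> carrier T \<Longrightarrow> x \<ominus>\<^bsub>T\<^esub> y = \<zero>\<^bsub>T\<^esub> \<Longrightarrow> x = y"
  using ag_minus_zero[OF V.R.abelian_group_axioms] by blast

lemma tf_cancel: "y \<in> carrier E' \<Longrightarrow> y' \<in> carrier E' \<Longrightarrow> c \<in> A \<Longrightarrow> ract E' y c = ract E' y' c \<Longrightarrow> y = y'"
proof -
  assume a: "y \<in> carrier E'" "y' \<in> carrier E'" "c \<in> A" "ract E' y c = ract E' y' c"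
  have "ract E' (y \<ominus>\<^bsub>E'\<^esub> y') c = ract E' y c \<ominus>\<^bsub>E'\<^esub> ract E' y' c"
    using a by (intro E'.ract_minus_l) auto
  also have "\<dots> = \<zero>\<^bsub>E'\<^esub>" unfolding a(4) a_minus_def using a by (intro E'.M.r_neg) auto
  finally have "y \<ominus>\<^bsub>E'\<^esub> y' = \<zero>\<^bsub>E'\<^esub>"
    by (rule torsion_free[OF E'.M.minus_closed[OF a(1,2)] a(3)])
  then show ?thesis using a E'_minus_zero by blast
qed

lemma star_uniq:
  assumes e: "e \<in> carrier E'" and t: "t \<in> carrier T" "t' \<in> carrier T" and a: "a \<in> A" "a' \<in> A"
    and eq: "\<phi> t \<otimes>\<^bsub>S\<^esub> inv\<^bsub>S\<^esub> (\<phi> a) = \<phi> t' \<otimes>\<^bsub>S\<^esub> inv\<^bsub>S\<^esub> (\<phi> a')"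
    and y: "y \<in> carrier E'" "y' \<in> carrier E'" "ract E' y a = ract E' e t" "ract E' y' a' = ract E' e t'"
  shows "y = y'"
proof -
  obtain u w b where uw: "u \<in> carrier T" "w \<in> carrier T" "b \<in> A" "b = a \<otimes>\<^bsub>T\<^esub> u" "b = a' \<otimes>\<^bsub>T\<^esub> w"
    using common_mult[OF a] by blast
  have "\<phi> (t \<otimes>\<^bsub>T\<^esub> u) = \<phi> (t' \<otimes>\<^bsub>T\<^esub> w)"
  proof -
    have "\<phi> (t \<otimes>\<^bsub>T\<^esub> u) \<otimes>\<^bsub>S\<^esub> inv\<^bsub>S\<^esub> (\<phi> b) = \<phi> (t' \<otimes>\<^bsub>T\<^esub> w) \<otimes>\<^bsub>S\<^esub> inv\<^bsub>S\<^esub> (\<phi> b)"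
      using rebase[OF t(1) a(1) uw(1,3,4)] rebase[OF t(2) a(2) uw(2,3,5)] eq by simp
    then have "(\<phi> (t \<otimes>\<^bsub>T\<^esub> u) \<otimes>\<^bsub>S\<^esub> inv\<^bsub>S\<^esub> (\<phi> b)) \<otimes>\<^bsub>S\<^esub> \<phi> b = (\<phi> (t' \<otimes>\<^bsub>T\<^esub> w) \<otimes>\<^bsub>S\<^esub> inv\<^bsub>S\<^esub> (\<phi> b)) \<otimes>\<^bsub>S\<^esub> \<phi> b"
      by simp
    then show ?thesis using uw t by (simp add: frac_times_den)
  qed
  then have "\<phi> (t \<otimes>\<^bsub>T\<^esub> u \<ominus>\<^bsub>T\<^esub> t' \<otimes>\<^bsub>T\<^esub> w) = \<phi> (t' \<otimes>\<^bsub>T\<^esub> w) \<ominus>\<^bsub>S\<^esub> \<phi> (t' \<otimes>\<^bsub>T\<^esub> w)"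
    using uw t by (simp add: phi_minus)
  also have "\<dots> = \<zero>\<^bsub>S\<^esub>" unfolding a_minus_def using uw t by (intro E.R.r_neg) auto
  finally have "\<phi> (t \<otimes>\<^bsub>T\<^esub> u \<ominus>\<^bsub>T\<^esub> t' \<otimes>\<^bsub>T\<^esub> w) = \<zero>\<^bsub>S\<^esub>" .
  moreover have "t \<otimes>\<^bsub>T\<^esub> u \<ominus>\<^bsub>T\<^esub> t' \<otimes>\<^bsub>T\<^esub> w \<in> carrier T" using uw t by simp
  ultimately obtain c where c: "c \<in> A" "(t \<otimes>\<^bsub>T\<^esub> u \<ominus>\<^bsub>T\<^esub> t' \<otimes>\<^bsub>T\<^esub> w) \<otimes>\<^bsub>T\<^esub> c = \<zero>\<^bsub>T\<^esub>"
    using phi_ker by blast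
  have tc: "t \<otimes>\<^bsub>T\<^esub> u \<otimes>\<^bsub>T\<^esub> c = t' \<otimes>\<^bsub>T\<^esub> w \<otimes>\<^bsub>T\<^esub> c"
  proof (rule T_minus_zero)
    show "t \<otimes>\<^bsub>T\<^esub> u \<otimes>\<^bsub>T\<^esub> c \<ominus>\<^bsub>T\<^esub> t' \<otimes>\<^bsub>T\<^esub> w \<otimes>\<^bsub>T\<^esub> c = \<zero>\<^bsub>T\<^esub>"
      using c uw t by (simp add: a_minus_def V.R.l_distr V.R.l_minus[symmetric] del: V.R.l_minus)
  qed (use c uw t in auto)
  have "ract E' y (b \<otimes>\<^bsub>T\<^esub> c) = ract E' e (t \<otimes>\<^bsub>T\<^esub> u \<otimes>\<^bsub>T\<^esub> c)"
    using uw(1,2) c y t e a by (simp add: uw(4) E'.ract_mult V.R.m_assoc)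
  also have "\<dots> = ract E' e (t' \<otimes>\<^bsub>T\<^esub> w \<otimes>\<^bsub>T\<^esub> c)" using tc by simp
  also have "\<dots> = ract E' y' (b \<otimes>\<^bsub>T\<^esub> c)"
    using uw(1,2) c y t e a by (simp add: uw(5) E'.ract_mult V.R.m_assoc)
  finally show ?thesis using tf_cancel[OF y(1,2) A_mult[OF uw(3) c(1)]] by simp
qed

definition star :: "'f \<Rightarrow> 's \<Rightarrow> 'f" where
  "star e s = (THE y. y \<in> carrier E' \<and> (\<exists>t\<in>carrier T. \<exists>a\<in>A.
      s = \<phi> t \<otimes>\<^bsub>S\<^esub> inv\<^bsub>S\<^esub> (\<phi> a) \<and> ract E' y a = ract E' e t))"

lemma star_char:
  assumes "e \<in> carrier E'" "t \<in> carrier T" "a \<in> A" "y \<in> carrier E'" "ract E' y a = ract E' e t"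
  shows "star e (\<phi> t \<otimes>\<^bsub>S\<^esub> inv\<^bsub>S\<^esub> (\<phi> a)) = y"
  unfolding star_def
proof (rule the_equality)
  show "y \<in> carrier E' \<and> (\<exists>t'\<in>carrier T. \<exists>a'\<in>A. \<phi> t \<otimes>\<^bsub>S\<^esub> inv\<^bsub>S\<^esub> (\<phi> a) = \<phi> t' \<otimes>\<^bsub>S\<^esub> inv\<^bsub>S\<^esub> (\<phi> a') \<and>
      ract E' y a' = ract E' e t')" using assms by blast
next
  fix y' assume "y' \<in> carrier E' \<and> (\<exists>t'\<in>carrier T. \<exists>a'\<in>A. \<phi> t \<otimes>\<^bsub>S\<^esub> inv\<^bsub>S\<^esub> (\<phi> a) = \<phi> t' \<otimes>\<^bsub>S\<^esub> inv\<^bsub>S\<^esub> (\<phi> a') \<and>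
      ract E' y' a' = ract E' e t')"
  then obtain t' a' where "y' \<in> carrier E'" "t' \<in> carrier T" "a' \<in> A"
     "\<phi> t \<otimes>\<^bsub>S\<^esub> inv\<^bsub>S\<^esub> (\<phi> a) = \<phi> t' \<otimes>\<^bsub>S\<^esub> inv\<^bsub>S\<^esub> (\<phi> a')" "ract E' y' a' = ract E' e t'" by blast
  then show "y' = y" using star_uniq[of e t' t a' a y' y] assms by auto
qed

lemma star_rep:
  assumes "e \<in> carrier E'" "t \<in> carrier T" "a \<in> A"
  obtains y where "y \<in> carrier E'" "ract E' y a = ract E' e t" "star e (\<phi> t \<otimes>\<^bsub>S\<^esub> inv\<^bsub>S\<^esub> (\<phi> a)) = y"
proof -
  obtain y where "y \<in> carrier E'" "ract E' y a = ract E' e t"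
    using divisible[of "ract E' e t" a] assms by auto
  then show ?thesis using that star_char assms by blast
qed

lemma star_closed[simp]: "e \<in> carrier E' \<Longrightarrow> s \<in> carrier S \<Longrightarrow> star e s \<in> carrier E'"
  by (metis S_frac star_rep)

lemma star_one[simp]: "e \<in> carrier E' \<Longrightarrow> star e \<one>\<^bsub>S\<^esub> = e"
proof -
  assume e: "e \<in> carrier E'"
  have h: "\<phi> \<one>\<^bsub>T\<^esub> \<otimes>\<^bsub>S\<^esub> inv\<^bsub>S\<^esub> (\<phi> \<one>\<^bsub>T\<^esub>) = \<one>\<^bsub>S\<^esub>" using inv_r[OF A_one] .
  have X: "star e (\<phi> \<one>\<^bsub>T\<^esub> \<otimes>\<^bsub>S\<^esub> inv\<^bsub>S\<^esub> (\<phi> \<one>\<^bsub>T\<^esub>)) = e"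
    by (rule star_char[OF e V.R.one_closed A_one e]) (use e in simp)
  show ?thesis using X unfolding h .
qed

lemma star_add_l:
  assumes "e \<in> carrier E'" "e' \<in> carrier E'" "s \<in> carrier S"
  shows "star (e \<oplus>\<^bsub>E'\<^esub> e') s = star e s \<oplus>\<^bsub>E'\<^esub> star e' s"
proof -
  obtain t a where ta: "t \<in> carrier T" "a \<in> A" "s = \<phi> t \<otimes>\<^bsub>S\<^esub> inv\<^bsub>S\<^esub> (\<phi> a)" using S_frac assms by blast
  obtain y where y: "y \<in> carrier E'" "ract E' y a = ract E' e t" "star e s = y" using star_rep assms ta by metis
  obtain y' where y': "y' \<in> carrier E'" "ract E' y' a = ract E' e' t" "star e' s = y'" using star_rep assms ta by metis
  have "star (e \<oplus>\<^bsub>E'\<^esub> e') s = y \<oplus>\<^bsub>E'\<^esub> y'" unfolding ta(3)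
    by (rule star_char) (use assms ta y y' in \<open>auto simp: E'.ract_add_l\<close>)
  then show ?thesis using y y' by simp
qed

lemma star_add_r:
  assumes e: "e \<in> carrier E'" and s: "s \<in> carrier S" "s' \<in> carrier S"
  shows "star e (s \<oplus>\<^bsub>S\<^esub> s') = star e s \<oplus>\<^bsub>E'\<^esub> star e s'"
proof -
  obtain t a where ta: "t \<in> carrier T" "a \<in> A" "s = \<phi> t \<otimes>\<^bsub>S\<^esub> inv\<^bsub>S\<^esub> (\<phi> a)" using S_frac s by blast
  obtain t' a' where ta': "t' \<in> carrier T" "a' \<in> A" "s' = \<phi> t' \<otimes>\<^bsub>S\<^esub> inv\<^bsub>S\<^esub> (\<phi> a')" using S_frac s by blast
  obtain u w b where uw: "u \<in> carrier T" "w \<in> carrier T" "b \<in> A" "b = a \<otimes>\<^bsub>T\<^esub> u" "b = a' \<otimes>\<^bsub>T\<^esub> w"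
    using common_mult[OF ta(2) ta'(2)] by blast
  have s1: "s = \<phi> (t \<otimes>\<^bsub>T\<^esub> u) \<otimes>\<^bsub>S\<^esub> inv\<^bsub>S\<^esub> (\<phi> b)" using rebase[OF ta(1,2) uw(1,3,4)] ta by simp
  have s2: "s' = \<phi> (t' \<otimes>\<^bsub>T\<^esub> w) \<otimes>\<^bsub>S\<^esub> inv\<^bsub>S\<^esub> (\<phi> b)" using rebase[OF ta'(1,2) uw(2,3,5)] ta' by simp
  have s12: "s \<oplus>\<^bsub>S\<^esub> s' = \<phi> (t \<otimes>\<^bsub>T\<^esub> u \<oplus>\<^bsub>T\<^esub> t' \<otimes>\<^bsub>T\<^esub> w) \<otimes>\<^bsub>S\<^esub> inv\<^bsub>S\<^esub> (\<phi> b)"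
    unfolding s1 s2 using uw ta ta' by (simp add: phi_add E.R.l_distr)
  obtain y where y: "y \<in> carrier E'" "ract E' y b = ract E' e (t \<otimes>\<^bsub>T\<^esub> u)" "star e s = y"
    using star_rep[of e "t \<otimes>\<^bsub>T\<^esub> u" b] e uw ta s1 by auto
  obtain y' where y': "y' \<in> carrier E'" "ract E' y' b = ract E' e (t' \<otimes>\<^bsub>T\<^esub> w)" "star e s' = y'"
    using star_rep[of e "t' \<otimes>\<^bsub>T\<^esub> w" b] e uw ta' s2 by auto
  have "star e (s \<oplus>\<^bsub>S\<^esub> s') = y \<oplus>\<^bsub>E'\<^esub> y'" unfolding s12
    by (rule star_char) (use e uw ta ta' y y' in \<open>auto simp: E'.ract_add_l E'.ract_add_r\<close>)
  then show ?thesis using y y' by simp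
qed

lemma star_ract:
  assumes e: "e \<in> carrier E'" and r: "r \<in> carrier T" and s: "s \<in> carrier S"
  shows "star (ract E' e r) s = star e (\<phi> r \<otimes>\<^bsub>S\<^esub> s)"
proof -
  obtain t a where ta: "t \<in> carrier T" "a \<in> A" "s = \<phi> t \<otimes>\<^bsub>S\<^esub> inv\<^bsub>S\<^esub> (\<phi> a)" using S_frac s by blast
  obtain y where y: "y \<in> carrier E'" "ract E' y a = ract E' (ract E' e r) t" "star (ract E' e r) s = y"
    using star_rep[of "ract E' e r" t a] e r ta by auto
  have eq1: "\<phi> r \<otimes>\<^bsub>S\<^esub> s = \<phi> (r \<otimes>\<^bsub>T\<^esub> t) \<otimes>\<^bsub>S\<^esub> inv\<^bsub>S\<^esub> (\<phi> a)"
    using ta r by (simp add: phi_mult E.R.m_assoc)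
  have eq2: "star e (\<phi> (r \<otimes>\<^bsub>T\<^esub> t) \<otimes>\<^bsub>S\<^esub> inv\<^bsub>S\<^esub> (\<phi> a)) = y"
    by (rule star_char) (use e r ta(1,2) y(1,2) in \<open>auto simp: E'.ract_mult\<close>)
  show ?thesis by (simp only: y(3) eq1 eq2)
qed

end

lemma ag_cancel3: assumes "abelian_group G" "y \<in> carrier G" "z \<in> carrier G"
  shows "(y \<oplus>\<^bsub>G\<^esub> z) \<ominus>\<^bsub>G\<^esub> y \<ominus>\<^bsub>G\<^esub> z = \<zero>\<^bsub>G\<^esub>"
proof -
  interpret G: abelian_group G by fact
  have "(y \<oplus>\<^bsub>G\<^esub> z) \<ominus>\<^bsub>G\<^esub> y \<ominus>\<^bsub>G\<^esub> z = (y \<oplus>\<^bsub>G\<^esub> z) \<oplus>\<^bsub>G\<^esub> (\<ominus>\<^bsub>G\<^esub> y \<oplus>\<^bsub>G\<^esub> \<ominus>\<^bsub>G\<^esub> z)"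
    using assms(2,3) by (simp add: a_minus_def G.a_assoc)
  also have "\<dots> = (y \<oplus>\<^bsub>G\<^esub> z) \<oplus>\<^bsub>G\<^esub> \<ominus>\<^bsub>G\<^esub> (y \<oplus>\<^bsub>G\<^esub> z)"
    using assms(2,3) by (simp add: G.minus_add)
  also have "\<dots> = \<zero>\<^bsub>G\<^esub>" using assms(2,3) by (intro G.r_neg) auto
  finally show ?thesis .
qed

definition supp :: "('p \<Rightarrow> int) \<Rightarrow> 'p set" where "supp c = {p. c p \<noteq> 0}"

lemma fs_in: "c \<in> formal_sums V S \<longleftrightarrow> finite (supp c) \<and> supp c \<subseteq> carrier V \<times> carrier S"
  unfolding formal_sums_def supp_def by auto

lemma supp_add: "supp (fs_add c d) \<subseteq> supp c \<union> supp d" unfolding supp_def fs_add_def by auto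
lemma supp_sub: "supp (fs_sub c d) \<subseteq> supp c \<union> supp d" unfolding supp_def fs_sub_def by auto
lemma supp_delta: "supp (delta p) = {p}" unfolding supp_def delta_def by auto

lemma fs_add_in: "c \<in> formal_sums V S \<Longrightarrow> d \<in> formal_sums V S \<Longrightarrow> fs_add c d \<in> formal_sums V S"
  unfolding fs_in using supp_add[of c d] by (meson finite_Un finite_subset le_sup_iff order_trans)
lemma fs_sub_in: "c \<in> formal_sums V S \<Longrightarrow> d \<in> formal_sums V S \<Longrightarrow> fs_sub c d \<in> formal_sums V S"
  unfolding fs_in using supp_sub[of c d] by (meson finite_Un finite_subset le_sup_iff order_trans)
lemma delta_in: "p \<in> carrier V \<times> carrier S \<Longrightarrow> delta p \<in> formal_sums V S"
  unfolding fs_in supp_delta by auto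
lemma zero_in: "(\<lambda>_. 0) \<in> formal_sums V S"
  unfolding fs_in supp_def by auto

lemma fs_add_sub: "fs_add (fs_sub c d) d = c" unfolding fs_add_def fs_sub_def by auto

context setting begin

definition w :: "'v \<times> 's \<Rightarrow> 'f" where "w p = star (g (fst p)) (snd p)"

lemma w_closed: "p \<in> carrier V \<times> carrier S \<Longrightarrow> w p \<in> carrier E'"
  unfolding w_def by auto

definition Phi :: "('v \<times> 's \<Rightarrow> int) \<Rightarrow> 'f" where
  "Phi c = finsum E' (\<lambda>p. [c p] \<cdot>\<^bsub>E'\<^esub> w p) (supp c)"

lemma pow0: "x \<in> carrier E' \<Longrightarrow> [(0::int)] \<cdot>\<^bsub>E'\<^esub> x = \<zero>\<^bsub>E'\<^esub>"
  by (simp add: add_pow_def)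

lemma Phi_on:
  assumes c: "c \<in> formal_sums V S" and U: "finite U" "supp c \<subseteq> U" "U \<subseteq> carrier V \<times> carrier S"
  shows "Phi c = finsum E' (\<lambda>p. [c p] \<cdot>\<^bsub>E'\<^esub> w p) U"
  unfolding Phi_def
proof (rule E'.M.add.finprod_mono_neutral_cong_left)
  show "\<And>i. i \<in> U - supp c \<Longrightarrow> [c i] \<cdot>\<^bsub>E'\<^esub> w i = \<zero>\<^bsub>E'\<^esub>"
    using U by (auto simp: supp_def pow0 w_closed)
  show "(\<lambda>p. [c p] \<cdot>\<^bsub>E'\<^esub> w p) \<in> U \<rightarrow> carrier E'"
    using U w_closed by (auto intro!: E'.M.add.int_pow_closed)
qed (use U in auto)

lemma Phi_add:
  assumes c: "c \<in> formal_sums V S" and d: "d \<in> formal_sums V S"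
  shows "Phi (fs_add c d) = Phi c \<oplus>\<^bsub>E'\<^esub> Phi d"
proof -
  define U where "U = supp c \<union> supp d"
  have U: "finite U" "U \<subseteq> carrier V \<times> carrier S" using c d unfolding U_def fs_in by auto
  have cl: "(\<lambda>p. [e p] \<cdot>\<^bsub>E'\<^esub> w p) \<in> U \<rightarrow> carrier E'" for e :: "'v \<times> 's \<Rightarrow> int"
    using U w_closed by (auto intro!: E'.M.add.int_pow_closed)
  have "Phi (fs_add c d) = finsum E' (\<lambda>p. [fs_add c d p] \<cdot>\<^bsub>E'\<^esub> w p) U"
    by (rule Phi_on) (use U c d supp_add[of c d] in \<open>auto simp: U_def intro: fs_add_in\<close>)
  also have "\<dots> = finsum E' (\<lambda>p. [c p] \<cdot>\<^bsub>E'\<^esub> w p \<oplus>\<^bsub>E'\<^esub> [d p] \<cdot>\<^bsub>E'\<^esub> w p) U"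
    by (rule E'.M.add.finprod_cong') (use U w_closed in \<open>auto simp: fs_add_def E'.M.add.int_pow_mult\<close>)
  also have "\<dots> = finsum E' (\<lambda>p. [c p] \<cdot>\<^bsub>E'\<^esub> w p) U \<oplus>\<^bsub>E'\<^esub> finsum E' (\<lambda>p. [d p] \<cdot>\<^bsub>E'\<^esub> w p) U"
    by (rule E'.M.add.finprod_multf[OF cl cl])
  also have "\<dots> = Phi c \<oplus>\<^bsub>E'\<^esub> Phi d"
    using Phi_on[OF c U(1) _ U(2)] Phi_on[OF d U(1) _ U(2)] by (simp add: U_def)
  finally show ?thesis .
qed

lemma Phi_closed: "c \<in> formal_sums V S \<Longrightarrow> Phi c \<in> carrier E'"
  unfolding Phi_def by (rule E'.M.add.finprod_closed) (auto intro!: E'.M.add.int_pow_closed w_closed simp: fs_in)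

lemma Phi_sub:
  assumes c: "c \<in> formal_sums V S" and d: "d \<in> formal_sums V S"
  shows "Phi (fs_sub c d) = Phi c \<ominus>\<^bsub>E'\<^esub> Phi d"
proof -
  have "Phi c = Phi (fs_sub c d) \<oplus>\<^bsub>E'\<^esub> Phi d"
    using Phi_add[OF fs_sub_in[OF c d] d] by (simp add: fs_add_sub)
  then show ?thesis using Phi_closed[OF c] Phi_closed[OF d] Phi_closed[OF fs_sub_in[OF c d]]
    by (simp add: a_minus_def E'.M.a_assoc E'.M.r_neg)
qed

lemma Phi_delta: "p \<in> carrier V \<times> carrier S \<Longrightarrow> Phi (delta p) = w p"
  unfolding Phi_def supp_delta using w_closed by (simp add: delta_def E'.M.add.int_pow_1)

lemma Phi_zero: "Phi (\<lambda>_. 0) = \<zero>\<^bsub>E'\<^esub>"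
  unfolding Phi_def supp_def by simp

lemma gens_in: "x \<in> tensor_gens T S \<phi> V \<Longrightarrow> x \<in> formal_sums V S"
  unfolding tensor_gens_def
  by (auto intro!: fs_sub_in delta_in simp: E.R.add.m_closed phi_closed)

lemma Phi_gens: "x \<in> tensor_gens T S \<phi> V \<Longrightarrow> Phi x = \<zero>\<^bsub>E'\<^esub>"
proof -
  assume "x \<in> tensor_gens T S \<phi> V"
  then consider
      (a) v v' s where "x = fs_sub (fs_sub (delta (v \<oplus>\<^bsub>V\<^esub> v', s)) (delta (v, s))) (delta (v', s))"
        "v \<in> carrier V" "v' \<in> carrier V" "s \<in> carrier S"
    | (b) v s s' where "x = fs_sub (fs_sub (delta (v, s \<oplus>\<^bsub>S\<^esub> s')) (delta (v, s))) (delta (v, s'))"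
        "v \<in> carrier V" "s \<in> carrier S" "s' \<in> carrier S"
    | (c) v t s where "x = fs_sub (delta (ract V v t, s)) (delta (v, \<phi> t \<otimes>\<^bsub>S\<^esub> s))"
        "v \<in> carrier V" "t \<in> carrier T" "s \<in> carrier S"
    unfolding tensor_gens_def by blast
  then show ?thesis
  proof cases
    case a
    have "Phi x = w (v \<oplus>\<^bsub>V\<^esub> v', s) \<ominus>\<^bsub>E'\<^esub> w (v, s) \<ominus>\<^bsub>E'\<^esub> w (v', s)"
      using a by (simp add: Phi_sub Phi_delta fs_sub_in delta_in)
    also have "\<dots> = (w (v, s) \<oplus>\<^bsub>E'\<^esub> w (v', s)) \<ominus>\<^bsub>E'\<^esub> w (v, s) \<ominus>\<^bsub>E'\<^esub> w (v', s)"
      using a by (simp add: w_def g_add star_add_l)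
    also have "\<dots> = \<zero>\<^bsub>E'\<^esub>" by (rule ag_cancel3[OF E'.M.abelian_group_axioms]) (use a in \<open>auto intro: w_closed\<close>)
    finally show ?thesis .
  next
    case b
    have "Phi x = w (v, s \<oplus>\<^bsub>S\<^esub> s') \<ominus>\<^bsub>E'\<^esub> w (v, s) \<ominus>\<^bsub>E'\<^esub> w (v, s')"
      using b by (simp add: Phi_sub Phi_delta fs_sub_in delta_in)
    also have "\<dots> = (w (v, s) \<oplus>\<^bsub>E'\<^esub> w (v, s')) \<ominus>\<^bsub>E'\<^esub> w (v, s) \<ominus>\<^bsub>E'\<^esub> w (v, s')"
      using b by (simp add: w_def star_add_r)
    also have "\<dots> = \<zero>\<^bsub>E'\<^esub>" by (rule ag_cancel3[OF E'.M.abelian_group_axioms]) (use b in \<open>auto intro: w_closed\<close>)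
    finally show ?thesis .
  next
    case c
    have "Phi x = w (ract V v t, s) \<ominus>\<^bsub>E'\<^esub> w (v, \<phi> t \<otimes>\<^bsub>S\<^esub> s)"
      using c by (simp add: Phi_sub Phi_delta delta_in)
    also have "\<dots> = w (v, \<phi> t \<otimes>\<^bsub>S\<^esub> s) \<ominus>\<^bsub>E'\<^esub> w (v, \<phi> t \<otimes>\<^bsub>S\<^esub> s)"
      using c by (simp add: w_def g_ract star_ract)
    also have "\<dots> = \<zero>\<^bsub>E'\<^esub>" unfolding a_minus_def
      by (rule E'.M.r_neg) (use c in \<open>auto intro: w_closed\<close>)
    finally show ?thesis .
  qed
qed

lemma rel_in_Phi: "x \<in> tensor_rel T S \<phi> V \<Longrightarrow> x \<in> formal_sums V S \<and> Phi x = \<zero>\<^bsub>E'\<^esub>"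
proof (induction rule: tensor_rel.induct)
  case zero then show ?case by (simp add: zero_in Phi_zero)
next
  case (plus c g) then show ?case by (simp add: fs_add_in gens_in Phi_add Phi_gens)
next
  case (minus c g) then show ?case by (simp add: fs_sub_in gens_in Phi_sub Phi_gens a_minus_def)
qed

lemma hard_dir: "u \<in> carrier V \<Longrightarrow> delta (u, \<one>\<^bsub>S\<^esub>) \<in> tensor_rel T S \<phi> V \<Longrightarrow> g u = \<zero>\<^bsub>E'\<^esub>"
  using rel_in_Phi[of "delta (u, \<one>\<^bsub>S\<^esub>)"] Phi_delta[of "(u, \<one>\<^bsub>S\<^esub>)"] by (simp add: w_def)

end

lemma ag_transfer:
  assumes G: "abelian_group G" and h: "carrier H = carrier G" "add H = add G" "zero H = zero G"
  shows "abelian_group H"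
proof -
  interpret G: abelian_group G by (rule G)
  show ?thesis
    by (rule abelian_groupI) (auto simp: h G.a_ac intro: G.l_neg)
qed

context setting begin

abbreviation ET where "ET \<equiv> restr S \<phi> E"

lemma modET: "right_module T ET"
  unfolding right_module_def
proof (intro conjI ballI)
  show "abelian_group ET" by (rule ag_transfer[OF E.M.abelian_group_axioms]) auto
qed (auto simp: ringT phi_add phi_mult E.ract_add_l E.ract_add_r E.ract_mult)

sublocale ET: rmod T ET by unfold_locales (rule modET)

end

lemma ag_minus2: assumes G: "abelian_group G" and c: "x \<in> carrier G" "y \<in> carrier G" "z \<in> carrier G"
  and e: "x \<ominus>\<^bsub>G\<^esub> y \<ominus>\<^bsub>G\<^esub> z = \<zero>\<^bsub>G\<^esub>"
  shows "x = y \<oplus>\<^bsub>G\<^esub> z"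
proof -
  interpret G: abelian_group G by (rule G)
  have "x \<ominus>\<^bsub>G\<^esub> y \<ominus>\<^bsub>G\<^esub> z = x \<ominus>\<^bsub>G\<^esub> (y \<oplus>\<^bsub>G\<^esub> z)"
    using c by (simp add: a_minus_def G.a_assoc G.minus_add)
  then show ?thesis using e c ag_minus_zero[OF G] by simp
qed

context setting begin

lemma beta_rhom: "rhom S (tensor_free T S \<phi> V) E \<beta>" using hullE unfolding hull_via_def by blast
lemma tf_simps[simp]: "carrier (tensor_free T S \<phi> V) = formal_sums V S"
  "ract (tensor_free T S \<phi> V) c s = fs_act S c s" "zero (tensor_free T S \<phi> V) = (\<lambda>_. 0)"
  by (auto simp: tensor_free_def ract_def)

lemma beta_closed[simp]: "c \<in> formal_sums V S \<Longrightarrow> \<beta> c \<in> carrier E"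
  using beta_rhom unfolding rhom_def by auto
lemma beta_add: "c \<in> formal_sums V S \<Longrightarrow> d \<in> formal_sums V S \<Longrightarrow> \<beta> (fs_add c d) = \<beta> c \<oplus>\<^bsub>E\<^esub> \<beta> d"
  using beta_rhom unfolding rhom_def by (auto simp: tensor_free_def)
lemma beta_act: "c \<in> formal_sums V S \<Longrightarrow> s \<in> carrier S \<Longrightarrow> \<beta> (fs_act S c s) = ract E (\<beta> c) s"
  using beta_rhom unfolding rhom_def by auto
lemma beta_ker: "c \<in> formal_sums V S \<Longrightarrow> \<beta> c = \<zero>\<^bsub>E\<^esub> \<longleftrightarrow> c \<in> tensor_rel T S \<phi> V"
  using hullE unfolding hull_via_def by (auto simp: tensor_free_def)
lemma ess_E: "essential S E (\<beta> ` formal_sums V S)"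
  using hullE unfolding hull_via_def by auto

lemma beta_sub: "c \<in> formal_sums V S \<Longrightarrow> d \<in> formal_sums V S \<Longrightarrow> \<beta> (fs_sub c d) = \<beta> c \<ominus>\<^bsub>E\<^esub> \<beta> d"
proof -
  assume c: "c \<in> formal_sums V S" and d: "d \<in> formal_sums V S"
  have "\<beta> c = \<beta> (fs_sub c d) \<oplus>\<^bsub>E\<^esub> \<beta> d"
    using beta_add[OF fs_sub_in[OF c d] d] by (simp add: fs_add_sub)
  then show ?thesis using c d fs_sub_in[OF c d]
    by (simp add: a_minus_def E.M.a_assoc E.M.r_neg)
qed

lemma gen_rel: "x \<in> tensor_gens T S \<phi> V \<Longrightarrow> x \<in> tensor_rel T S \<phi> V"
  using tensor_rel.plus[OF tensor_rel.zero, of x] by (simp add: fs_add_def)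

lemma beta_gen: "x \<in> tensor_gens T S \<phi> V \<Longrightarrow> \<beta> x = \<zero>\<^bsub>E\<^esub>"
  using gen_rel gens_in beta_ker by blast

lemma delta_in'[simp]: "v \<in> carrier V \<Longrightarrow> s \<in> carrier S \<Longrightarrow> delta (v, s) \<in> formal_sums V S"
  by (rule delta_in) auto

lemma b_add: assumes "v \<in> carrier V" "v' \<in> carrier V" "s \<in> carrier S"
  shows "\<beta> (delta (v \<oplus>\<^bsub>V\<^esub> v', s)) = \<beta> (delta (v, s)) \<oplus>\<^bsub>E\<^esub> \<beta> (delta (v', s))"
proof -
  let ?x = "fs_sub (fs_sub (delta (v \<oplus>\<^bsub>V\<^esub> v', s)) (delta (v, s))) (delta (v', s))"
  have "?x \<in> tensor_gens T S \<phi> V" unfolding tensor_gens_def using assms by blast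
  then have "\<beta> ?x = \<zero>\<^bsub>E\<^esub>" by (rule beta_gen)
  then have "\<beta> (delta (v \<oplus>\<^bsub>V\<^esub> v', s)) \<ominus>\<^bsub>E\<^esub> \<beta> (delta (v, s)) \<ominus>\<^bsub>E\<^esub> \<beta> (delta (v', s)) = \<zero>\<^bsub>E\<^esub>"
    using assms by (simp add: beta_sub fs_sub_in)
  then show ?thesis by (rule ag_minus2[OF E.M.abelian_group_axioms, rotated 3]) (use assms in auto)
qed

lemma b_ract: assumes "v \<in> carrier V" "t \<in> carrier T" "s \<in> carrier S"
  shows "\<beta> (delta (ract V v t, s)) = \<beta> (delta (v, \<phi> t \<otimes>\<^bsub>S\<^esub> s))"
proof -
  let ?x = "fs_sub (delta (ract V v t, s)) (delta (v, \<phi> t \<otimes>\<^bsub>S\<^esub> s))"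
  have "?x \<in> tensor_gens T S \<phi> V" unfolding tensor_gens_def using assms by blast
  then have "\<beta> ?x = \<zero>\<^bsub>E\<^esub>" by (rule beta_gen)
  then have "\<beta> (delta (ract V v t, s)) \<ominus>\<^bsub>E\<^esub> \<beta> (delta (v, \<phi> t \<otimes>\<^bsub>S\<^esub> s)) = \<zero>\<^bsub>E\<^esub>"
    using assms by (simp add: beta_sub)
  then show ?thesis using ag_minus_zero[OF E.M.abelian_group_axioms] assms by simp
qed

lemma fs_act_delta: "fs_act S (delta (v, u)) s' = delta (v, u \<otimes>\<^bsub>S\<^esub> s')"
proof (rule ext, clarify)
  fix v' u'
  have "{s. delta (v, u) (v', s) \<noteq> 0 \<and> s \<otimes>\<^bsub>S\<^esub> s' = u'} = (if v' = v \<and> u \<otimes>\<^bsub>S\<^esub> s' = u' then {u} else {})"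
    by (auto simp: delta_def)
  then show "fs_act S (delta (v, u)) s' (v', u') = delta (v, u \<otimes>\<^bsub>S\<^esub> s') (v', u')"
    unfolding fs_act_def by (auto simp: delta_def)
qed

lemma beta_delta_act: "v \<in> carrier V \<Longrightarrow> u \<in> carrier S \<Longrightarrow> s' \<in> carrier S \<Longrightarrow>
   ract E (\<beta> (delta (v, u))) s' = \<beta> (delta (v, u \<otimes>\<^bsub>S\<^esub> s'))"
  using beta_act[of "delta (v, u)" s'] by (simp add: fs_act_delta)

definition b1 :: "'v \<Rightarrow> 'e" where "b1 v = \<beta> (delta (v, \<one>\<^bsub>S\<^esub>))"

lemma b1_closed[simp]: "v \<in> carrier V \<Longrightarrow> b1 v \<in> carrier E" unfolding b1_def by simp
lemma b1_add: "v \<in> carrier V \<Longrightarrow> v' \<in> carrier V \<Longrightarrow> b1 (v \<oplus>\<^bsub>V\<^esub> v') = b1 v \<oplus>\<^bsub>E\<^esub> b1 v'"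
  unfolding b1_def by (rule b_add) auto
lemma b1_ract: "v \<in> carrier V \<Longrightarrow> t \<in> carrier T \<Longrightarrow> ract E (b1 v) (\<phi> t) = b1 (ract V v t)"
  unfolding b1_def by (simp add: beta_delta_act b_ract)
lemma b1_zero: "b1 \<zero>\<^bsub>V\<^esub> = \<zero>\<^bsub>E\<^esub>"
  by (rule E.idem_zero) (auto simp: b1_add[symmetric])
lemma b1_neg: "v \<in> carrier V \<Longrightarrow> b1 (\<ominus>\<^bsub>V\<^esub> v) = \<ominus>\<^bsub>E\<^esub> b1 v"
proof -
  assume v: "v \<in> carrier V"
  have "b1 (\<ominus>\<^bsub>V\<^esub> v) = b1 (ract V v (\<ominus>\<^bsub>T\<^esub> \<one>\<^bsub>T\<^esub>))" using v by (simp add: V.ract_neg_r)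
  also have "\<dots> = ract E (b1 v) (\<phi> (\<ominus>\<^bsub>T\<^esub> \<one>\<^bsub>T\<^esub>))" using v by (simp add: b1_ract)
  also have "\<dots> = \<ominus>\<^bsub>E\<^esub> b1 v" using v by (simp add: phi_neg E.ract_neg_r)
  finally show ?thesis .
qed

lemma g_neg: "v \<in> carrier V \<Longrightarrow> g (\<ominus>\<^bsub>V\<^esub> v) = \<ominus>\<^bsub>E'\<^esub> g v"
proof -
  assume v: "v \<in> carrier V"
  have "g (\<ominus>\<^bsub>V\<^esub> v) = g (ract V v (\<ominus>\<^bsub>T\<^esub> \<one>\<^bsub>T\<^esub>))" using v by (simp add: V.ract_neg_r)
  also have "\<dots> = \<ominus>\<^bsub>E'\<^esub> g v" using v by (simp add: g_ract E'.ract_neg_r)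
  finally show ?thesis .
qed

lemma E_unit_cancel: "x \<in> carrier E \<Longrightarrow> a \<in> A \<Longrightarrow> ract E x (\<phi> a) = \<zero>\<^bsub>E\<^esub> \<Longrightarrow> x = \<zero>\<^bsub>E\<^esub>"
proof -
  assume x: "x \<in> carrier E" and a: "a \<in> A" and z: "ract E x (\<phi> a) = \<zero>\<^bsub>E\<^esub>"
  have "x = ract E x (\<phi> a \<otimes>\<^bsub>S\<^esub> inv\<^bsub>S\<^esub> (\<phi> a))" using x a by (simp add: inv_r)
  also have "\<dots> = ract E (ract E x (\<phi> a)) (inv\<^bsub>S\<^esub> (\<phi> a))" using x a by (simp add: E.ract_mult)
  also have "\<dots> = \<zero>\<^bsub>E\<^esub>" using a z by simp
  finally show ?thesis .
qed

lemma b1_zero_iff: "v \<in> carrier V \<Longrightarrow> b1 v = \<zero>\<^bsub>E\<^esub> \<longleftrightarrow> g v = \<zero>\<^bsub>E'\<^esub>"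
proof
  assume v: "v \<in> carrier V" and "b1 v = \<zero>\<^bsub>E\<^esub>"
  then have "delta (v, \<one>\<^bsub>S\<^esub>) \<in> tensor_rel T S \<phi> V" unfolding b1_def using beta_ker by simp
  then show "g v = \<zero>\<^bsub>E'\<^esub>" using hard_dir v by blast
next
  assume v: "v \<in> carrier V" and "g v = \<zero>\<^bsub>E'\<^esub>"
  then obtain a where a: "a \<in> A" "ract V v a = \<zero>\<^bsub>V\<^esub>" using g_ker unfolding torsion_def by auto
  have "ract E (b1 v) (\<phi> a) = \<zero>\<^bsub>E\<^esub>" using v a by (simp add: b1_ract b1_zero)
  then show "b1 v = \<zero>\<^bsub>E\<^esub>" using E_unit_cancel v a by simp
qed

lemma b1_eq: assumes "v \<in> carrier V" "v' \<in> carrier V" "b1 v = b1 v'" shows "g v = g v'"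
proof -
  have "b1 (v \<oplus>\<^bsub>V\<^esub> \<ominus>\<^bsub>V\<^esub> v') = \<zero>\<^bsub>E\<^esub>" using assms by (simp add: b1_add b1_neg E.M.r_neg)
  then have "g (v \<oplus>\<^bsub>V\<^esub> \<ominus>\<^bsub>V\<^esub> v') = \<zero>\<^bsub>E'\<^esub>" using b1_zero_iff assms by simp
  then have "g v \<ominus>\<^bsub>E'\<^esub> g v' = \<zero>\<^bsub>E'\<^esub>" using assms by (simp add: g_add g_neg a_minus_def)
  then show ?thesis using E'_minus_zero assms by simp
qed

definition NN :: "'e set" where "NN = b1 ` carrier V"

definition h :: "'e \<Rightarrow> 'f" where "h e = (THE y. \<exists>v\<in>carrier V. e = b1 v \<and> y = g v)"

lemma h_b1: "v \<in> carrier V \<Longrightarrow> h (b1 v) = g v"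
  unfolding h_def by (rule the_equality) (auto dest: b1_eq)

definition tlin :: "'e set \<Rightarrow> ('e \<Rightarrow> 'f) \<Rightarrow> bool" where
  "tlin M \<psi> \<longleftrightarrow> \<psi> \<in> M \<rightarrow> carrier E' \<and> (\<forall>x\<in>M. \<forall>y\<in>M. \<psi> (x \<oplus>\<^bsub>E\<^esub> y) = \<psi> x \<oplus>\<^bsub>E'\<^esub> \<psi> y) \<and>
     (\<forall>x\<in>M. \<forall>t\<in>carrier T. \<psi> (ract E x (\<phi> t)) = ract E' (\<psi> x) t)"

lemma NN_submod: "submod T ET NN"
  unfolding submod_def NN_def
proof (intro conjI ballI)
  show "b1 ` carrier V \<subseteq> carrier ET" by auto
  show "\<zero>\<^bsub>ET\<^esub> \<in> b1 ` carrier V" using b1_zero by (metis V.M.zero_closed image_eqI restr_simps(2))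
next
  fix x y assume "x \<in> b1 ` carrier V" "y \<in> b1 ` carrier V"
  then show "x \<oplus>\<^bsub>ET\<^esub> y \<in> b1 ` carrier V" by (auto simp: b1_add[symmetric])
next
  fix x assume "x \<in> b1 ` carrier V"
  then show "\<ominus>\<^bsub>ET\<^esub> x \<in> b1 ` carrier V" by (auto simp: b1_neg[symmetric])
next
  fix x r assume "x \<in> b1 ` carrier V" "r \<in> carrier T"
  then show "ract ET x r \<in> b1 ` carrier V" by (auto simp: b1_ract)
qed

lemma h_tlin: "tlin NN h"
  unfolding tlin_def NN_def by (auto simp: h_b1 b1_add[symmetric] g_add b1_ract g_ract)

lemma h_inj: "x \<in> NN \<Longrightarrow> h x = \<zero>\<^bsub>E'\<^esub> \<Longrightarrow> x = \<zero>\<^bsub>E\<^esub>"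
  unfolding NN_def using b1_zero_iff h_b1 by auto

end

context abelian_group begin
lemma ag_shift: assumes "x \<in> carrier G" "x' \<in> carrier G" "y \<in> carrier G" "y' \<in> carrier G"
  "x \<oplus> y = x' \<oplus> y'" shows "y \<ominus> y' = x' \<ominus> x"
proof -
  have e: "\<ominus> x \<oplus> (x \<oplus> y) = y" using assms(1,3) by (rule r_neg1)
  have "y \<ominus> y' = (\<ominus> x \<oplus> (x \<oplus> y)) \<ominus> y'" by (simp only: e)
  also have "\<dots> = (\<ominus> x \<oplus> (x' \<oplus> y')) \<ominus> y'" by (simp only: assms(5))
  also have "\<dots> = \<ominus> x \<oplus> (x' \<oplus> (y' \<oplus> \<ominus> y'))" unfolding a_minus_def
    using assms by (simp only: a_assoc a_inv_closed a_closed)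
  also have "\<dots> = \<ominus> x \<oplus> x'" using assms by (simp only: r_neg r_zero)
  also have "\<dots> = x' \<ominus> x" unfolding a_minus_def using assms by (simp only: a_comm a_inv_closed)
  finally show ?thesis .
qed
lemma ag_shift_back: assumes "a \<in> carrier G" "b \<in> carrier G" "c \<in> carrier G" "d \<in> carrier G"
  "b \<ominus> d = c \<ominus> a" shows "a \<oplus> b = c \<oplus> d"
proof -
  have "b = (b \<oplus> \<ominus> d) \<oplus> d" using assms by (simp only: a_assoc l_neg r_zero a_inv_closed)
  also have "\<dots> = (c \<oplus> \<ominus> a) \<oplus> d" using assms(5) unfolding a_minus_def by simp
  finally have "a \<oplus> b = a \<oplus> ((c \<oplus> \<ominus> a) \<oplus> d)" by simp
  also have "\<dots> = c \<oplus> ((a \<oplus> \<ominus> a) \<oplus> d)" using assms by (simp only: a_assoc a_lcomm a_inv_closed a_closed)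
  also have "\<dots> = c \<oplus> d" using assms by (simp only: r_neg l_zero)
  finally show ?thesis .
qed
lemma ag_swap: assumes "a \<in> carrier G" "b \<in> carrier G" "c \<in> carrier G" "d \<in> carrier G"
  shows "(a \<oplus> b) \<oplus> (c \<oplus> d) = (a \<oplus> c) \<oplus> (b \<oplus> d)"
  using assms by (simp only: a_assoc a_lcomm a_closed)
end

context setting begin

lemma tlinD:
  assumes "tlin M \<psi>"
  shows "\<And>x. x \<in> M \<Longrightarrow> \<psi> x \<in> carrier E'"
    "\<And>x y. x \<in> M \<Longrightarrow> y \<in> M \<Longrightarrow> \<psi> (x \<oplus>\<^bsub>E\<^esub> y) = \<psi> x \<oplus>\<^bsub>E'\<^esub> \<psi> y"
    "\<And>x t. x \<in> M \<Longrightarrow> t \<in> carrier T \<Longrightarrow> \<psi> (ract E x (\<phi> t)) = ract E' (\<psi> x) t"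
  using assms unfolding tlin_def by auto

lemma tsubD:
  assumes "submod T ET M"
  shows "M \<subseteq> carrier E" "\<zero>\<^bsub>E\<^esub> \<in> M" "\<And>v w. v \<in> M \<Longrightarrow> w \<in> M \<Longrightarrow> v \<oplus>\<^bsub>E\<^esub> w \<in> M"
    "\<And>v. v \<in> M \<Longrightarrow> \<ominus>\<^bsub>E\<^esub> v \<in> M" "\<And>v r. v \<in> M \<Longrightarrow> r \<in> carrier T \<Longrightarrow> ract E v (\<phi> r) \<in> M"
  using submodD[OF assms] by auto

lemma tsubI:
  assumes "M \<subseteq> carrier E" "\<zero>\<^bsub>E\<^esub> \<in> M" "\<And>v w. v \<in> M \<Longrightarrow> w \<in> M \<Longrightarrow> v \<oplus>\<^bsub>E\<^esub> w \<in> M"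
    "\<And>v. v \<in> M \<Longrightarrow> \<ominus>\<^bsub>E\<^esub> v \<in> M" "\<And>v r. v \<in> M \<Longrightarrow> r \<in> carrier T \<Longrightarrow> ract E v (\<phi> r) \<in> M"
  shows "submod T ET M"
  using assms unfolding submod_def by auto

lemma phi_zero[simp]: "\<phi> \<zero>\<^bsub>T\<^esub> = \<zero>\<^bsub>S\<^esub>"
  by (rule ring_hom_zero[OF phi_hom ringT ringS])

lemma E_ract_phi_neg: "x \<in> carrier E \<Longrightarrow> ract E x (\<phi> (\<ominus>\<^bsub>T\<^esub> \<one>\<^bsub>T\<^esub>)) = \<ominus>\<^bsub>E\<^esub> x"
  by (simp add: phi_neg E.ract_neg_r)

lemma tlin_neg: assumes "tlin M \<psi>" "submod T ET M" "x \<in> M" shows "\<psi> (\<ominus>\<^bsub>E\<^esub> x) = \<ominus>\<^bsub>E'\<^esub> \<psi> x"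
proof -
  have x: "x \<in> carrier E" using tsubD(1)[OF assms(2)] assms(3) by auto
  have "\<psi> (\<ominus>\<^bsub>E\<^esub> x) = \<psi> (ract E x (\<phi> (\<ominus>\<^bsub>T\<^esub> \<one>\<^bsub>T\<^esub>)))" using x by (simp add: E_ract_phi_neg)
  also have "\<dots> = ract E' (\<psi> x) (\<ominus>\<^bsub>T\<^esub> \<one>\<^bsub>T\<^esub>)" using tlinD(3)[OF assms(1) assms(3)] by simp
  also have "\<dots> = \<ominus>\<^bsub>E'\<^esub> \<psi> x" using tlinD(1)[OF assms(1) assms(3)] by (simp add: E'.ract_neg_r)
  finally show ?thesis .
qed

lemma tlin_minus: assumes "tlin M \<psi>" "submod T ET M" "x \<in> M" "y \<in> M"
  shows "\<psi> (x \<ominus>\<^bsub>E\<^esub> y) = \<psi> x \<ominus>\<^bsub>E'\<^esub> \<psi> y"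
  using assms tlinD(2)[OF assms(1) assms(3)] tsubD(4)[OF assms(2)] tlin_neg
  by (simp add: a_minus_def)

lemma baer_step:
  assumes M: "submod T ET M" and psi: "tlin M \<psi>" and m: "m \<in> carrier E"
  shows "\<exists>M' \<psi>'. submod T ET M' \<and> M \<subseteq> M' \<and> m \<in> M' \<and> tlin M' \<psi>' \<and> (\<forall>x\<in>M. \<psi>' x = \<psi> x)"
proof -
  note Mc = tsubD(1)[OF M] and M0 = tsubD(2)[OF M] and Madd = tsubD(3)[OF M]
    and Mneg = tsubD(4)[OF M] and Mact = tsubD(5)[OF M]
  note pcl = tlinD(1)[OF psi] and padd = tlinD(2)[OF psi] and pact = tlinD(3)[OF psi]
  have Mc': "x \<in> M \<Longrightarrow> x \<in> carrier E" for x using Mc by auto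
  define I where "I = {r \<in> carrier T. ract E m (\<phi> r) \<in> M}"
  define f where "f r = \<psi> (ract E m (\<phi> r))" for r
  have sI: "submod T (rreg T) I"
    unfolding submod_def I_def
  proof (intro conjI ballI)
    show "\<zero>\<^bsub>rreg T\<^esub> \<in> {r \<in> carrier T. ract E m (\<phi> r) \<in> M}" using m M0 by simp
  next
    fix x y assume "x \<in> {r \<in> carrier T. ract E m (\<phi> r) \<in> M}" "y \<in> {r \<in> carrier T. ract E m (\<phi> r) \<in> M}"
    then show "x \<oplus>\<^bsub>rreg T\<^esub> y \<in> {r \<in> carrier T. ract E m (\<phi> r) \<in> M}"
      using m Madd by (simp add: phi_add E.ract_add_r)
  next
    fix x assume "x \<in> {r \<in> carrier T. ract E m (\<phi> r) \<in> M}"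
    then show "\<ominus>\<^bsub>rreg T\<^esub> x \<in> {r \<in> carrier T. ract E m (\<phi> r) \<in> M}"
      using m Mneg by (simp add: phi_neg E.ract_neg_r)
  next
    fix x r assume "x \<in> {r \<in> carrier T. ract E m (\<phi> r) \<in> M}" "r \<in> carrier T"
    then show "ract (rreg T) x r \<in> {r \<in> carrier T. ract E m (\<phi> r) \<in> M}"
      using m Mact by (simp add: phi_mult E.ract_mult)
  qed auto
  have "\<exists>e\<in>carrier E'. \<forall>x\<in>I. f x = ract E' e x"
    using injE' unfolding injective_mod_def
  proof (elim conjE allE impE)
    show "submod T (rreg T) I \<and> f \<in> I \<rightarrow> carrier E' \<and>
      (\<forall>x\<in>I. \<forall>y\<in>I. f (x \<oplus>\<^bsub>T\<^esub> y) = f x \<oplus>\<^bsub>E'\<^esub> f y) \<and>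
      (\<forall>x\<in>I. \<forall>r\<in>carrier T. f (x \<otimes>\<^bsub>T\<^esub> r) = ract E' (f x) r)"
    proof (intro conjI ballI funcsetI sI)
      fix x assume "x \<in> I" then show "f x \<in> carrier E'" unfolding I_def f_def using pcl by auto
    next
      fix x y assume "x \<in> I" "y \<in> I"
      then show "f (x \<oplus>\<^bsub>T\<^esub> y) = f x \<oplus>\<^bsub>E'\<^esub> f y"
        unfolding I_def f_def using m by (simp add: phi_add E.ract_add_r padd)
    next
      fix x r assume "x \<in> I" "r \<in> carrier T"
      then show "f (x \<otimes>\<^bsub>T\<^esub> r) = ract E' (f x) r"
        unfolding I_def f_def using m by (simp add: phi_mult E.ract_mult pact)
    qed
  qed auto
  then obtain e where e: "e \<in> carrier E'" "\<And>r. r \<in> I \<Longrightarrow> \<psi> (ract E m (\<phi> r)) = ract E' e r"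
    unfolding f_def by auto
  define M' where "M' = {x \<oplus>\<^bsub>E\<^esub> ract E m (\<phi> r) | x r. x \<in> M \<and> r \<in> carrier T}"
  define \<psi>' where "\<psi>' y = (THE z. \<exists>x\<in>M. \<exists>r\<in>carrier T. y = x \<oplus>\<^bsub>E\<^esub> ract E m (\<phi> r) \<and> z = \<psi> x \<oplus>\<^bsub>E'\<^esub> ract E' e r)" for y
  have wd: "\<psi> x \<oplus>\<^bsub>E'\<^esub> ract E' e r = \<psi> x' \<oplus>\<^bsub>E'\<^esub> ract E' e r'"
    if xx: "x \<in> M" "x' \<in> M" "r \<in> carrier T" "r' \<in> carrier T"
      and eq: "x \<oplus>\<^bsub>E\<^esub> ract E m (\<phi> r) = x' \<oplus>\<^bsub>E\<^esub> ract E m (\<phi> r')" for x x' r r'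
  proof -
    have d: "ract E m (\<phi> r) \<ominus>\<^bsub>E\<^esub> ract E m (\<phi> r') = x' \<ominus>\<^bsub>E\<^esub> x"
      by (rule E.M.ag_shift) (use xx eq Mc' m in auto)
    have "ract E m (\<phi> (r \<ominus>\<^bsub>T\<^esub> r')) = ract E m (\<phi> r) \<ominus>\<^bsub>E\<^esub> ract E m (\<phi> r')"
      using xx m by (simp add: phi_minus E.ract_minus_r)
    also have "\<dots> = x' \<ominus>\<^bsub>E\<^esub> x" by (rule d)
    finally have dd: "ract E m (\<phi> (r \<ominus>\<^bsub>T\<^esub> r')) = x' \<ominus>\<^bsub>E\<^esub> x" .
    then have "r \<ominus>\<^bsub>T\<^esub> r' \<in> I" unfolding I_def using xx E.submod_minus[OF _ _ _] Madd Mneg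
      by (auto simp: a_minus_def)
    then have "\<psi> (ract E m (\<phi> (r \<ominus>\<^bsub>T\<^esub> r'))) = ract E' e (r \<ominus>\<^bsub>T\<^esub> r')" by (rule e(2))
    then have "ract E' e (r \<ominus>\<^bsub>T\<^esub> r') = \<psi> (x' \<ominus>\<^bsub>E\<^esub> x)" unfolding dd by simp
    then have "ract E' e r \<ominus>\<^bsub>E'\<^esub> ract E' e r' = \<psi> x' \<ominus>\<^bsub>E'\<^esub> \<psi> x"
      using xx e(1) tlin_minus[OF psi M] by (simp add: E'.ract_minus_r)
    then show ?thesis by (rule E'.M.ag_shift_back[rotated 4]) (use xx e pcl in auto)
  qed
  have peq: "\<psi>' (x \<oplus>\<^bsub>E\<^esub> ract E m (\<phi> r)) = \<psi> x \<oplus>\<^bsub>E'\<^esub> ract E' e r" if "x \<in> M" "r \<in> carrier T" for x r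
    unfolding \<psi>'_def
  proof (rule the_equality)
    show "\<exists>x'\<in>M. \<exists>r'\<in>carrier T. x \<oplus>\<^bsub>E\<^esub> ract E m (\<phi> r) = x' \<oplus>\<^bsub>E\<^esub> ract E m (\<phi> r') \<and>
        \<psi> x \<oplus>\<^bsub>E'\<^esub> ract E' e r = \<psi> x' \<oplus>\<^bsub>E'\<^esub> ract E' e r'"
      using that by blast
  next
    fix z assume "\<exists>x'\<in>M. \<exists>r'\<in>carrier T. x \<oplus>\<^bsub>E\<^esub> ract E m (\<phi> r) = x' \<oplus>\<^bsub>E\<^esub> ract E m (\<phi> r') \<and>
        z = \<psi> x' \<oplus>\<^bsub>E'\<^esub> ract E' e r'"
    then obtain x' r' where h: "x' \<in> M" "r' \<in> carrier T"
      "x \<oplus>\<^bsub>E\<^esub> ract E m (\<phi> r) = x' \<oplus>\<^bsub>E\<^esub> ract E m (\<phi> r')" "z = \<psi> x' \<oplus>\<^bsub>E'\<^esub> ract E' e r'"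
      by blast
    have "\<psi> x \<oplus>\<^bsub>E'\<^esub> ract E' e r = \<psi> x' \<oplus>\<^bsub>E'\<^esub> ract E' e r'" by (rule wd) (use that h in auto)
    then show "z = \<psi> x \<oplus>\<^bsub>E'\<^esub> ract E' e r" using h(4) by simp
  qed
  have M'I: "x \<oplus>\<^bsub>E\<^esub> ract E m (\<phi> r) \<in> M'" if "x \<in> M" "r \<in> carrier T" for x r
    unfolding M'_def using that by blast
  have M'E: "P y" if "y \<in> M'" "\<And>x r. x \<in> M \<Longrightarrow> r \<in> carrier T \<Longrightarrow> P (x \<oplus>\<^bsub>E\<^esub> ract E m (\<phi> r))" for y P
    using that unfolding M'_def by blast
  have mz: "ract E m (\<phi> \<zero>\<^bsub>T\<^esub>) = \<zero>\<^bsub>E\<^esub>" using m by simp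
  have sM': "submod T ET M'"
  proof (rule tsubI)
    show "M' \<subseteq> carrier E" by (auto elim!: M'E simp: m Mc')
    show "\<zero>\<^bsub>E\<^esub> \<in> M'" using M'I[OF M0 V.R.zero_closed] m by simp
  next
    fix v w assume "v \<in> M'" "w \<in> M'"
    then show "v \<oplus>\<^bsub>E\<^esub> w \<in> M'"
    proof (elim M'E)
      fix x r x' r' assume h: "x \<in> M" "r \<in> carrier T" "x' \<in> M" "r' \<in> carrier T"
      have "(x \<oplus>\<^bsub>E\<^esub> ract E m (\<phi> r)) \<oplus>\<^bsub>E\<^esub> (x' \<oplus>\<^bsub>E\<^esub> ract E m (\<phi> r')) =
          (x \<oplus>\<^bsub>E\<^esub> x') \<oplus>\<^bsub>E\<^esub> ract E m (\<phi> (r \<oplus>\<^bsub>T\<^esub> r'))"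
        using h m Mc' by (simp add: E.M.ag_swap phi_add E.ract_add_r)
      then show "(x \<oplus>\<^bsub>E\<^esub> ract E m (\<phi> r)) \<oplus>\<^bsub>E\<^esub> (x' \<oplus>\<^bsub>E\<^esub> ract E m (\<phi> r')) \<in> M'"
        using M'I[OF Madd[OF h(1,3)]] h by simp
    qed
  next
    fix v assume "v \<in> M'"
    then show "\<ominus>\<^bsub>E\<^esub> v \<in> M'"
    proof (elim M'E)
      fix x r assume h: "x \<in> M" "r \<in> carrier T"
      have "\<ominus>\<^bsub>E\<^esub> (x \<oplus>\<^bsub>E\<^esub> ract E m (\<phi> r)) = \<ominus>\<^bsub>E\<^esub> x \<oplus>\<^bsub>E\<^esub> ract E m (\<phi> (\<ominus>\<^bsub>T\<^esub> r))"
        using h m Mc' by (simp add: E.M.minus_add phi_neg E.ract_neg_r)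
      then show "\<ominus>\<^bsub>E\<^esub> (x \<oplus>\<^bsub>E\<^esub> ract E m (\<phi> r)) \<in> M'"
        using M'I[OF Mneg[OF h(1)]] h by simp
    qed
  next
    fix v t assume "v \<in> M'" "t \<in> carrier T"
    then show "ract E v (\<phi> t) \<in> M'"
    proof (elim M'E)
      fix x r assume h: "x \<in> M" "r \<in> carrier T"
      have "ract E (x \<oplus>\<^bsub>E\<^esub> ract E m (\<phi> r)) (\<phi> t) = ract E x (\<phi> t) \<oplus>\<^bsub>E\<^esub> ract E m (\<phi> (r \<otimes>\<^bsub>T\<^esub> t))"
        using h m Mc' \<open>t \<in> carrier T\<close> by (simp add: E.ract_add_l phi_mult E.ract_mult)
      then show "ract E (x \<oplus>\<^bsub>E\<^esub> ract E m (\<phi> r)) (\<phi> t) \<in> M'"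
        using M'I[OF Mact[OF h(1) \<open>t \<in> carrier T\<close>]] h \<open>t \<in> carrier T\<close> by simp
    qed
  qed
  have tl: "tlin M' \<psi>'"
    unfolding tlin_def
  proof (intro conjI ballI funcsetI)
    fix y assume "y \<in> M'" then show "\<psi>' y \<in> carrier E'"
      by (elim M'E) (simp add: peq pcl e)
  next
    fix v w assume "v \<in> M'" "w \<in> M'"
    then show "\<psi>' (v \<oplus>\<^bsub>E\<^esub> w) = \<psi>' v \<oplus>\<^bsub>E'\<^esub> \<psi>' w"
    proof (elim M'E)
      fix x r x' r' assume h: "x \<in> M" "r \<in> carrier T" "x' \<in> M" "r' \<in> carrier T"
      have "(x \<oplus>\<^bsub>E\<^esub> ract E m (\<phi> r)) \<oplus>\<^bsub>E\<^esub> (x' \<oplus>\<^bsub>E\<^esub> ract E m (\<phi> r')) =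
          (x \<oplus>\<^bsub>E\<^esub> x') \<oplus>\<^bsub>E\<^esub> ract E m (\<phi> (r \<oplus>\<^bsub>T\<^esub> r'))"
        using h m Mc' by (simp add: E.M.ag_swap phi_add E.ract_add_r)
      moreover have "\<psi> (x \<oplus>\<^bsub>E\<^esub> x') \<oplus>\<^bsub>E'\<^esub> ract E' e (r \<oplus>\<^bsub>T\<^esub> r') =
          (\<psi> x \<oplus>\<^bsub>E'\<^esub> ract E' e r) \<oplus>\<^bsub>E'\<^esub> (\<psi> x' \<oplus>\<^bsub>E'\<^esub> ract E' e r')"
        using h e pcl by (simp add: padd E'.ract_add_r E'.M.ag_swap)
      ultimately show "\<psi>' ((x \<oplus>\<^bsub>E\<^esub> ract E m (\<phi> r)) \<oplus>\<^bsub>E\<^esub> (x' \<oplus>\<^bsub>E\<^esub> ract E m (\<phi> r'))) =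
          \<psi>' (x \<oplus>\<^bsub>E\<^esub> ract E m (\<phi> r)) \<oplus>\<^bsub>E'\<^esub> \<psi>' (x' \<oplus>\<^bsub>E\<^esub> ract E m (\<phi> r'))"
        using h by (simp add: peq Madd)
    qed
  next
    fix v t assume "v \<in> M'" "t \<in> carrier T"
    then show "\<psi>' (ract E v (\<phi> t)) = ract E' (\<psi>' v) t"
    proof (elim M'E)
      fix x r assume h: "x \<in> M" "r \<in> carrier T"
      have "ract E (x \<oplus>\<^bsub>E\<^esub> ract E m (\<phi> r)) (\<phi> t) = ract E x (\<phi> t) \<oplus>\<^bsub>E\<^esub> ract E m (\<phi> (r \<otimes>\<^bsub>T\<^esub> t))"
        using h m Mc' \<open>t \<in> carrier T\<close> by (simp add: E.ract_add_l phi_mult E.ract_mult)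
      then show "\<psi>' (ract E (x \<oplus>\<^bsub>E\<^esub> ract E m (\<phi> r)) (\<phi> t)) = ract E' (\<psi>' (x \<oplus>\<^bsub>E\<^esub> ract E m (\<phi> r))) t"
        using h \<open>t \<in> carrier T\<close> e pcl by (simp add: peq Mact pact E'.ract_add_l E'.ract_mult)
    qed
  qed
  have sub: "M \<subseteq> M'"
  proof
    fix x assume x: "x \<in> M"
    then have "x = x \<oplus>\<^bsub>E\<^esub> ract E m (\<phi> \<zero>\<^bsub>T\<^esub>)" using mz Mc' by simp
    then show "x \<in> M'" using M'I[OF x V.R.zero_closed] by simp
  qed
  have ext: "\<forall>x\<in>M. \<psi>' x = \<psi> x"
  proof
    fix x assume x: "x \<in> M"
    then have "x = x \<oplus>\<^bsub>E\<^esub> ract E m (\<phi> \<zero>\<^bsub>T\<^esub>)" using mz Mc' by simp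
    then have "\<psi>' x = \<psi> x \<oplus>\<^bsub>E'\<^esub> ract E' e \<zero>\<^bsub>T\<^esub>" using peq[OF x V.R.zero_closed] by simp
    then show "\<psi>' x = \<psi> x" using e pcl x by simp
  qed
  have "m = \<zero>\<^bsub>E\<^esub> \<oplus>\<^bsub>E\<^esub> ract E m (\<phi> \<one>\<^bsub>T\<^esub>)" using m by simp
  then have "m \<in> M'" using M'I[OF M0 V.R.one_closed] by simp
  then show ?thesis using sM' sub tl ext by blast
qed

end

context setting begin

lemma baer_fin:
  assumes "finite X" "X \<subseteq> carrier E" "submod T ET M" "tlin M \<psi>"
  shows "\<exists>M' \<psi>'. submod T ET M' \<and> M \<subseteq> M' \<and> X \<subseteq> M' \<and> tlin M' \<psi>' \<and> (\<forall>x\<in>M. \<psi>' x = \<psi> x)"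
  using assms
proof (induction X rule: finite_induct)
  case empty then show ?case by blast
next
  case (insert x F)
  then obtain M1 \<psi>1 where h1: "submod T ET M1" "M \<subseteq> M1" "F \<subseteq> M1" "tlin M1 \<psi>1" "\<forall>y\<in>M. \<psi>1 y = \<psi> y"
    by auto
  obtain M2 \<psi>2 where h2: "submod T ET M2" "M1 \<subseteq> M2" "x \<in> M2" "tlin M2 \<psi>2" "\<forall>y\<in>M1. \<psi>2 y = \<psi>1 y"
    using baer_step[OF h1(1) h1(4), of x] insert by auto
  have a1: "M \<subseteq> M2" using h1(2) h2(2) by (rule subset_trans)
  have a2: "insert x F \<subseteq> M2" using h1(3) h2(2,3) by blast
  have a3: "\<forall>y\<in>M. \<psi>2 y = \<psi> y"
  proof
    fix y assume "y \<in> M"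
    then have "y \<in> M1" using h1(2) by blast
    then have "\<psi>2 y = \<psi>1 y" using h2(5) by blast
    also have "\<dots> = \<psi> y" using h1(5) \<open>y \<in> M\<close> by blast
    finally show "\<psi>2 y = \<psi> y" .
  qed
  show ?case using h2(1) a1 a2 h2(4) a3 by blast
qed

definition sat :: "'e set \<Rightarrow> 'e set" where
  "sat M = {e \<in> carrier E. \<exists>a\<in>A. ract E e (\<phi> a) \<in> M}"

lemma Ssub_Tsub: "submod S E K \<Longrightarrow> submod T ET K"
proof -
  assume K: "submod S E K"
  show ?thesis
  proof (rule tsubI)
    show "K \<subseteq> carrier E" by (rule submodD(1)[OF K])
    show "\<zero>\<^bsub>E\<^esub> \<in> K" by (rule submodD(2)[OF K])
    show "\<And>v w. v \<in> K \<Longrightarrow> w \<in> K \<Longrightarrow> v \<oplus>\<^bsub>E\<^esub> w \<in> K" by (rule submodD(3)[OF K])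
    show "\<And>v. v \<in> K \<Longrightarrow> \<ominus>\<^bsub>E\<^esub> v \<in> K" by (rule submodD(4)[OF K])
    show "\<And>v r. v \<in> K \<Longrightarrow> r \<in> carrier T \<Longrightarrow> ract E v (\<phi> r) \<in> K"
      by (rule submodD(5)[OF K]) (simp_all)
  qed
qed

lemma sat_incl: "submod T ET M \<Longrightarrow> M \<subseteq> sat M"
proof
  fix x assume M: "submod T ET M" and x: "x \<in> M"
  have xc: "x \<in> carrier E" using tsubD(1)[OF M] x by blast
  have "ract E x (\<phi> \<one>\<^bsub>T\<^esub>) = x" using xc by simp
  then show "x \<in> sat M" unfolding sat_def using xc x A_one by force
qed

lemma sat_submod: assumes M: "submod T ET M" shows "submod S E (sat M)"
  unfolding submod_def
proof (intro conjI ballI)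
  note Mc = tsubD(1)[OF M] and M0 = tsubD(2)[OF M] and Madd = tsubD(3)[OF M]
    and Mneg = tsubD(4)[OF M] and Mact = tsubD(5)[OF M]
  show "sat M \<subseteq> carrier E" unfolding sat_def by auto
  show "\<zero>\<^bsub>E\<^esub> \<in> sat M" unfolding sat_def using A_one M0 by auto
next
  note Mc = tsubD(1)[OF M] and M0 = tsubD(2)[OF M] and Madd = tsubD(3)[OF M]
    and Mneg = tsubD(4)[OF M] and Mact = tsubD(5)[OF M]
  fix v w assume "v \<in> sat M" "w \<in> sat M"
  then obtain a a' where h: "v \<in> carrier E" "w \<in> carrier E" "a \<in> A" "a' \<in> A"
    "ract E v (\<phi> a) \<in> M" "ract E w (\<phi> a') \<in> M" unfolding sat_def by auto
  obtain u u' b where b: "u \<in> carrier T" "u' \<in> carrier T" "b \<in> A" "b = a \<otimes>\<^bsub>T\<^esub> u" "b = a' \<otimes>\<^bsub>T\<^esub> u'"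
    using common_mult[OF h(3,4)] by blast
  have "ract E v (\<phi> b) = ract E (ract E v (\<phi> a)) (\<phi> u)" using h b(1) by (simp add: b(4) phi_mult E.ract_mult)
  then have 1: "ract E v (\<phi> b) \<in> M" using Mact h b by simp
  have "ract E w (\<phi> b) = ract E (ract E w (\<phi> a')) (\<phi> u')" using h b(2) by (simp add: b(5) phi_mult E.ract_mult)
  then have 2: "ract E w (\<phi> b) \<in> M" using Mact h b by simp
  have "ract E (v \<oplus>\<^bsub>E\<^esub> w) (\<phi> b) \<in> M" using 1 2 Madd h b by (simp add: E.ract_add_l)
  then show "v \<oplus>\<^bsub>E\<^esub> w \<in> sat M" unfolding sat_def using h b by auto
next
  note Mc = tsubD(1)[OF M] and M0 = tsubD(2)[OF M] and Madd = tsubD(3)[OF M]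
    and Mneg = tsubD(4)[OF M] and Mact = tsubD(5)[OF M]
  fix v assume "v \<in> sat M"
  then obtain a where h: "v \<in> carrier E" "a \<in> A" "ract E v (\<phi> a) \<in> M" unfolding sat_def by auto
  then show "\<ominus>\<^bsub>E\<^esub> v \<in> sat M" unfolding sat_def using Mneg by (auto simp: E.ract_neg_l)
next
  note Mc = tsubD(1)[OF M] and M0 = tsubD(2)[OF M] and Madd = tsubD(3)[OF M]
    and Mneg = tsubD(4)[OF M] and Mact = tsubD(5)[OF M]
  fix v s assume "v \<in> sat M" "s \<in> carrier S"
  then obtain a where h: "v \<in> carrier E" "a \<in> A" "ract E v (\<phi> a) \<in> M" unfolding sat_def by auto
  obtain t a' where ta: "t \<in> carrier T" "a' \<in> A" "s = \<phi> t \<otimes>\<^bsub>S\<^esub> inv\<^bsub>S\<^esub> (\<phi> a')"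
    using S_frac \<open>s \<in> carrier S\<close> by blast
  obtain t'' a'' where o: "t'' \<in> carrier T" "a'' \<in> A" "t \<otimes>\<^bsub>T\<^esub> a'' = a \<otimes>\<^bsub>T\<^esub> t''"
    using A_ore[OF ta(1) h(2)] by blast
  have c: "a' \<otimes>\<^bsub>T\<^esub> a'' \<in> A" using A_mult ta o by blast
  have "s \<otimes>\<^bsub>S\<^esub> \<phi> (a' \<otimes>\<^bsub>T\<^esub> a'') = (s \<otimes>\<^bsub>S\<^esub> \<phi> a') \<otimes>\<^bsub>S\<^esub> \<phi> a''"
    using ta o \<open>s \<in> carrier S\<close> by (simp add: phi_mult E.R.m_assoc)
  also have "\<dots> = \<phi> (t \<otimes>\<^bsub>T\<^esub> a'')" unfolding ta(3) using ta(1,2) o(1,2) by (simp add: frac_times_den phi_mult)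
  also have "\<dots> = \<phi> a \<otimes>\<^bsub>S\<^esub> \<phi> t''" using o h by (simp add: phi_mult)
  finally have sc: "s \<otimes>\<^bsub>S\<^esub> \<phi> (a' \<otimes>\<^bsub>T\<^esub> a'') = \<phi> a \<otimes>\<^bsub>S\<^esub> \<phi> t''" .
  have "ract E (ract E v s) (\<phi> (a' \<otimes>\<^bsub>T\<^esub> a'')) = ract E v (s \<otimes>\<^bsub>S\<^esub> \<phi> (a' \<otimes>\<^bsub>T\<^esub> a''))"
    using h c \<open>s \<in> carrier S\<close> by (simp add: E.ract_mult)
  also have "\<dots> = ract E (ract E v (\<phi> a)) (\<phi> t'')" unfolding sc using h o by (simp add: E.ract_mult)
  finally have "ract E (ract E v s) (\<phi> (a' \<otimes>\<^bsub>T\<^esub> a'')) \<in> M" using Mact[OF h(3) o(1)] by simp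
  then show "ract E v s \<in> sat M" unfolding sat_def using c h \<open>s \<in> carrier S\<close> by auto
qed

definition psat :: "'e set \<Rightarrow> ('e \<Rightarrow> 'f) \<Rightarrow> 'e \<Rightarrow> 'f" where
  "psat M \<psi> e = (THE y. y \<in> carrier E' \<and> (\<exists>a\<in>A. ract E e (\<phi> a) \<in> M \<and> ract E' y a = \<psi> (ract E e (\<phi> a))))"

lemma psat_uniq:
  assumes M: "submod T ET M" and psi: "tlin M \<psi>" and e: "e \<in> carrier E"
    and a: "a \<in> A" "a' \<in> A" "ract E e (\<phi> a) \<in> M" "ract E e (\<phi> a') \<in> M"
    and y: "y \<in> carrier E'" "y' \<in> carrier E'" "ract E' y a = \<psi> (ract E e (\<phi> a))" "ract E' y' a' = \<psi> (ract E e (\<phi> a'))"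
  shows "y = y'"
proof -
  obtain u u' b where b: "u \<in> carrier T" "u' \<in> carrier T" "b \<in> A" "b = a \<otimes>\<^bsub>T\<^esub> u" "b = a' \<otimes>\<^bsub>T\<^esub> u'"
    using common_mult[OF a(1,2)] by blast
  have "ract E' y b = ract E' (ract E' y a) u" using y a b(1) by (simp add: b(4) E'.ract_mult)
  also have "\<dots> = \<psi> (ract E (ract E e (\<phi> a)) (\<phi> u))" using tlinD(3)[OF psi a(3) b(1)] y by simp
  also have "\<dots> = \<psi> (ract E e (\<phi> b))" using e a b(1) by (simp add: b(4) phi_mult E.ract_mult)
  finally have 1: "ract E' y b = \<psi> (ract E e (\<phi> b))" .
  have "ract E' y' b = ract E' (ract E' y' a') u'" using y a b(2) by (simp add: b(5) E'.ract_mult)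
  also have "\<dots> = \<psi> (ract E (ract E e (\<phi> a')) (\<phi> u'))" using tlinD(3)[OF psi a(4) b(2)] y by simp
  also have "\<dots> = \<psi> (ract E e (\<phi> b))" using e a b(2) by (simp add: b(5) phi_mult E.ract_mult)
  finally have 2: "ract E' y' b = \<psi> (ract E e (\<phi> b))" .
  show ?thesis using tf_cancel[OF y(1,2) b(3)] 1 2 by simp
qed

lemma psat_char:
  assumes M: "submod T ET M" and psi: "tlin M \<psi>" and e: "e \<in> carrier E"
    and a: "a \<in> A" "ract E e (\<phi> a) \<in> M" and y: "y \<in> carrier E'" "ract E' y a = \<psi> (ract E e (\<phi> a))"
  shows "psat M \<psi> e = y"
  unfolding psat_def
proof (rule the_equality)
  show "y \<in> carrier E' \<and> (\<exists>a\<in>A. ract E e (\<phi> a) \<in> M \<and> ract E' y a = \<psi> (ract E e (\<phi> a)))"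
    using a y by blast
next
  fix z assume "z \<in> carrier E' \<and> (\<exists>a\<in>A. ract E e (\<phi> a) \<in> M \<and> ract E' z a = \<psi> (ract E e (\<phi> a)))"
  then obtain a' where h: "z \<in> carrier E'" "a' \<in> A" "ract E e (\<phi> a') \<in> M" "ract E' z a' = \<psi> (ract E e (\<phi> a'))"
    by blast
  show "z = y" by (rule psat_uniq[OF M psi e h(2) a(1) h(3) a(2) h(1) y(1) h(4) y(2)])
qed

lemma psat_val:
  assumes M: "submod T ET M" and psi: "tlin M \<psi>" and e: "e \<in> carrier E"
    and a: "a \<in> A" "ract E e (\<phi> a) \<in> M"
  shows "psat M \<psi> e \<in> carrier E' \<and> ract E' (psat M \<psi> e) a = \<psi> (ract E e (\<phi> a))"
proof -
  obtain y where y: "y \<in> carrier E'" "ract E' y a = \<psi> (ract E e (\<phi> a))"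
    using divisible[OF tlinD(1)[OF psi a(2)] a(1)] by blast
  then show ?thesis using psat_char[OF M psi e a y] by simp
qed

lemma psat_ext: assumes M: "submod T ET M" and psi: "tlin M \<psi>" and x: "x \<in> M"
  shows "psat M \<psi> x = \<psi> x"
proof -
  have xc: "x \<in> carrier E" using tsubD(1)[OF M] x by auto
  show ?thesis by (rule psat_char[OF M psi xc A_one]) (use x xc tlinD(1)[OF psi x] in auto)
qed

lemma psat_tlin: assumes M: "submod T ET M" and psi: "tlin M \<psi>"
  shows "tlin (sat M) (psat M \<psi>)"
  unfolding tlin_def
proof (intro conjI ballI funcsetI)
  note Mact = tsubD(5)[OF M] and Madd = tsubD(3)[OF M]
  fix e assume "e \<in> sat M"
  then obtain a where "e \<in> carrier E" "a \<in> A" "ract E e (\<phi> a) \<in> M" unfolding sat_def by auto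
  then show "psat M \<psi> e \<in> carrier E'" using psat_val[OF M psi] by blast
next
  note Mact = tsubD(5)[OF M] and Madd = tsubD(3)[OF M]
  fix v w assume "v \<in> sat M" "w \<in> sat M"
  then obtain a a' where h: "v \<in> carrier E" "w \<in> carrier E" "a \<in> A" "a' \<in> A"
    "ract E v (\<phi> a) \<in> M" "ract E w (\<phi> a') \<in> M" unfolding sat_def by auto
  obtain u u' b where b: "u \<in> carrier T" "u' \<in> carrier T" "b \<in> A" "b = a \<otimes>\<^bsub>T\<^esub> u" "b = a' \<otimes>\<^bsub>T\<^esub> u'"
    using common_mult[OF h(3,4)] by blast
  have "ract E v (\<phi> b) = ract E (ract E v (\<phi> a)) (\<phi> u)" using h b(1) by (simp add: b(4) phi_mult E.ract_mult)
  then have 1: "ract E v (\<phi> b) \<in> M" using Mact h b by simp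
  have "ract E w (\<phi> b) = ract E (ract E w (\<phi> a')) (\<phi> u')" using h b(2) by (simp add: b(5) phi_mult E.ract_mult)
  then have 2: "ract E w (\<phi> b) \<in> M" using Mact h b by simp
  have vb: "psat M \<psi> v \<in> carrier E' \<and> ract E' (psat M \<psi> v) b = \<psi> (ract E v (\<phi> b))"
    by (rule psat_val[OF M psi h(1) b(3) 1])
  have wb: "psat M \<psi> w \<in> carrier E' \<and> ract E' (psat M \<psi> w) b = \<psi> (ract E w (\<phi> b))"
    by (rule psat_val[OF M psi h(2) b(3) 2])
  have 3: "ract E (v \<oplus>\<^bsub>E\<^esub> w) (\<phi> b) = ract E v (\<phi> b) \<oplus>\<^bsub>E\<^esub> ract E w (\<phi> b)"
    using h b by (simp add: E.ract_add_l)
  show "psat M \<psi> (v \<oplus>\<^bsub>E\<^esub> w) = psat M \<psi> v \<oplus>\<^bsub>E'\<^esub> psat M \<psi> w"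
  proof (rule psat_char[OF M psi _ b(3)])
    show "v \<oplus>\<^bsub>E\<^esub> w \<in> carrier E" using h by simp
    show "ract E (v \<oplus>\<^bsub>E\<^esub> w) (\<phi> b) \<in> M" unfolding 3 using Madd 1 2 by simp
    show "psat M \<psi> v \<oplus>\<^bsub>E'\<^esub> psat M \<psi> w \<in> carrier E'" using vb wb by simp
    show "ract E' (psat M \<psi> v \<oplus>\<^bsub>E'\<^esub> psat M \<psi> w) b = \<psi> (ract E (v \<oplus>\<^bsub>E\<^esub> w) (\<phi> b))"
      unfolding 3 using vb wb b 1 2 by (simp add: E'.ract_add_l tlinD(2)[OF psi])
  qed
next
  note Mact = tsubD(5)[OF M] and Madd = tsubD(3)[OF M]
  fix e t assume "e \<in> sat M" "t \<in> carrier T"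
  then obtain a where h: "e \<in> carrier E" "a \<in> A" "ract E e (\<phi> a) \<in> M" unfolding sat_def by auto
  obtain t'' a'' where o: "t'' \<in> carrier T" "a'' \<in> A" "t \<otimes>\<^bsub>T\<^esub> a'' = a \<otimes>\<^bsub>T\<^esub> t''"
    using A_ore[OF \<open>t \<in> carrier T\<close> h(2)] by blast
  have ea: "psat M \<psi> e \<in> carrier E' \<and> ract E' (psat M \<psi> e) a = \<psi> (ract E e (\<phi> a))"
    by (rule psat_val[OF M psi h])
  have 1: "ract E (ract E e (\<phi> t)) (\<phi> a'') = ract E (ract E e (\<phi> a)) (\<phi> t'')"
  proof -
    have "ract E (ract E e (\<phi> t)) (\<phi> a'') = ract E e (\<phi> (t \<otimes>\<^bsub>T\<^esub> a''))"
      using h o(1,2) \<open>t \<in> carrier T\<close> by (simp add: phi_mult E.ract_mult)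
    also have "\<dots> = ract E (ract E e (\<phi> a)) (\<phi> t'')" unfolding o(3)
      using h o(1,2) by (simp add: phi_mult E.ract_mult)
    finally show ?thesis .
  qed
  show "psat M \<psi> (ract E e (\<phi> t)) = ract E' (psat M \<psi> e) t"
  proof (rule psat_char[OF M psi _ o(2)])
    show "ract E e (\<phi> t) \<in> carrier E" using h \<open>t \<in> carrier T\<close> by simp
    show "ract E (ract E e (\<phi> t)) (\<phi> a'') \<in> M" unfolding 1 using Mact h o by simp
    show "ract E' (psat M \<psi> e) t \<in> carrier E'" using ea \<open>t \<in> carrier T\<close> by simp
    have "ract E' (ract E' (psat M \<psi> e) t) a'' = ract E' (psat M \<psi> e) (t \<otimes>\<^bsub>T\<^esub> a'')"
      using ea o(1,2) \<open>t \<in> carrier T\<close> by (simp add: E'.ract_mult)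
    also have "\<dots> = ract E' (ract E' (psat M \<psi> e) a) t''" unfolding o(3)
      using ea o(1,2) h by (simp add: E'.ract_mult)
    also have "\<dots> = \<psi> (ract E (ract E e (\<phi> a)) (\<phi> t''))" using ea tlinD(3)[OF psi h(3) o(1)] by simp
    finally show "ract E' (ract E' (psat M \<psi> e) t) a'' = \<psi> (ract E (ract E e (\<phi> t)) (\<phi> a''))"
      unfolding 1 .
  qed
qed

end

definition mass :: "('p \<Rightarrow> int) \<Rightarrow> nat" where "mass c = (\<Sum>q\<in>supp c. nat \<bar>c q\<bar>)"

lemma mass_less:
  assumes fin: "finite (supp c)" and p: "p \<in> supp c" and same: "\<And>q. q \<noteq> p \<Longrightarrow> c' q = c q"
    and lt: "\<bar>c' p\<bar> < \<bar>c p\<bar>"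
  shows "mass c' < mass c"
proof -
  have sub: "supp c' \<subseteq> supp c"
  proof
    fix q assume "q \<in> supp c'"
    then show "q \<in> supp c" using same[of q] p unfolding supp_def by (cases "q = p") auto
  qed
  have "mass c' = (\<Sum>q\<in>supp c. nat \<bar>c' q\<bar>)"
    unfolding mass_def by (rule sum.mono_neutral_left) (use fin sub in \<open>auto simp: supp_def\<close>)
  also have "\<dots> < (\<Sum>q\<in>supp c. nat \<bar>c q\<bar>)"
  proof (rule sum_strict_mono_ex1[OF fin])
    show "\<forall>x\<in>supp c. nat \<bar>c' x\<bar> \<le> nat \<bar>c x\<bar>"
      using same lt by (metis order.strict_implies_order nat_mono order_refl)
    show "\<exists>a\<in>supp c. nat \<bar>c' a\<bar> < nat \<bar>c a\<bar>" using p lt by (intro bexI[OF _ p]) (simp add: supp_def)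
  qed
  finally show ?thesis unfolding mass_def .
qed

lemma fs_sub_add: "fs_sub (fs_add c d) d = c" unfolding fs_add_def fs_sub_def by auto

context setting begin

lemma beta_zero_fs: "\<beta> (\<lambda>_. 0) = \<zero>\<^bsub>E\<^esub>"
  using beta_ker[OF zero_in] tensor_rel.zero by blast

lemma beta_in:
  assumes K: "submod S E K" and D: "\<And>v s. v \<in> carrier V \<Longrightarrow> s \<in> carrier S \<Longrightarrow> \<beta> (delta (v, s)) \<in> K"
  shows "c \<in> formal_sums V S \<Longrightarrow> \<beta> c \<in> K"
proof (induction "mass c" arbitrary: c rule: less_induct)
  case less
  note c = less.prems
  show ?case
  proof (cases "supp c = {}")
    case True
    then have "c = (\<lambda>_. 0)" unfolding supp_def by auto
    then show ?thesis using beta_zero_fs submodD(2)[OF K] by simp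
  next
    case False
    then obtain p where p: "p \<in> supp c" by auto
    have fin: "finite (supp c)" and pc: "p \<in> carrier V \<times> carrier S" using c p unfolding fs_in by auto
    have d: "delta p \<in> formal_sums V S" using delta_in[OF pc] .
    have Dp: "\<beta> (delta p) \<in> K" using D pc by (cases p) auto
    show ?thesis
    proof (cases "c p > 0")
      case True
      define c' where "c' = fs_sub c (delta p)"
      have c'F: "c' \<in> formal_sums V S" unfolding c'_def using fs_sub_in[OF c d] .
      have "mass c' < mass c"
        by (rule mass_less[OF fin p]) (use True in \<open>auto simp: c'_def fs_sub_def delta_def\<close>)
      then have "\<beta> c' \<in> K" using less.hyps c'F by blast
      moreover have "\<beta> c = \<beta> c' \<oplus>\<^bsub>E\<^esub> \<beta> (delta p)"
        using beta_add[OF c'F d] unfolding c'_def by (simp add: fs_add_sub)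
      ultimately show ?thesis using submodD(3)[OF K] Dp by simp
    next
      case False
      then have neg: "c p < 0" using p unfolding supp_def by auto
      define c' where "c' = fs_add c (delta p)"
      have c'F: "c' \<in> formal_sums V S" unfolding c'_def using fs_add_in[OF c d] .
      have "mass c' < mass c"
        by (rule mass_less[OF fin p]) (use neg in \<open>auto simp: c'_def fs_add_def delta_def\<close>)
      then have "\<beta> c' \<in> K" using less.hyps c'F by blast
      moreover have "\<beta> c = \<beta> c' \<ominus>\<^bsub>E\<^esub> \<beta> (delta p)"
        using beta_sub[OF c'F d] unfolding c'_def by (simp add: fs_sub_add)
      ultimately show ?thesis using E.submod_minus[OF K] Dp by simp
    qed
  qed
qed

lemma delta_sat: assumes v: "v \<in> carrier V" and s: "s \<in> carrier S"
  shows "\<beta> (delta (v, s)) \<in> sat NN"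
proof -
  obtain t a where ta: "t \<in> carrier T" "a \<in> A" "s = \<phi> t \<otimes>\<^bsub>S\<^esub> inv\<^bsub>S\<^esub> (\<phi> a)" using S_frac s by blast
  have "ract E (\<beta> (delta (v, s))) (\<phi> a) = \<beta> (delta (v, s \<otimes>\<^bsub>S\<^esub> \<phi> a))"
    using v s ta by (simp add: beta_delta_act)
  also have "\<dots> = \<beta> (delta (v, \<phi> t))" unfolding ta(3) using ta by (simp add: frac_times_den)
  also have "\<dots> = b1 (ract V v t)" unfolding b1_def using v ta by (simp add: b_ract)
  finally have "ract E (\<beta> (delta (v, s))) (\<phi> a) \<in> NN" unfolding NN_def using v ta by simp
  then show ?thesis unfolding sat_def using ta v s by auto
qed

lemma beta_sat: "c \<in> formal_sums V S \<Longrightarrow> \<beta> c \<in> sat NN"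
  by (rule beta_in[OF sat_submod[OF NN_submod]]) (rule delta_sat)

end

context setting begin

lemma main:
  assumes LA: "locally_artinian T E'"
  shows "locally_artinian S E"
  unfolding locally_artinian_def artinian_submod_def
proof (intro allI impI)
  fix X :: "'e set" and f :: "nat \<Rightarrow> 'e set"
  assume X: "finite X \<and> X \<subseteq> carrier E"
  assume fch: "(\<forall>n. submod S E (f n) \<and> f n \<subseteq> gen_submod S E X) \<and> (\<forall>n. f (Suc n) \<subseteq> f n)"
  obtain M \<psi> where M: "submod T ET M" "NN \<subseteq> M" "X \<subseteq> M" "tlin M \<psi>" "\<forall>x\<in>NN. \<psi> x = h x"
    using baer_fin[OF _ _ NN_submod h_tlin, of X] X by blast
  define P0 where "P0 = sat M"
  define \<Psi> where "\<Psi> = psat M \<psi>"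
  have P0S: "submod S E P0" unfolding P0_def by (rule sat_submod[OF M(1)])
  have P0T: "submod T ET P0" by (rule Ssub_Tsub[OF P0S])
  have tl: "tlin P0 \<Psi>" unfolding P0_def \<Psi>_def by (rule psat_tlin[OF M(1) M(4)])
  have MP0: "M \<subseteq> P0" unfolding P0_def by (rule sat_incl[OF M(1)])
  have ext: "\<And>x. x \<in> M \<Longrightarrow> \<Psi> x = \<psi> x" unfolding \<Psi>_def by (rule psat_ext[OF M(1) M(4)])
  note P0c = tsubD(1)[OF P0T] and P00 = tsubD(2)[OF P0T] and P0add = tsubD(3)[OF P0T]
    and P0neg = tsubD(4)[OF P0T] and P0act = tsubD(5)[OF P0T]
  note Pcl = tlinD(1)[OF tl] and Padd = tlinD(2)[OF tl] and Pact = tlinD(3)[OF tl]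
  have Psi0: "\<Psi> \<zero>\<^bsub>E\<^esub> = \<zero>\<^bsub>E'\<^esub>"
  proof (rule E'.idem_zero)
    show "\<Psi> \<zero>\<^bsub>E\<^esub> \<in> carrier E'" using Pcl P00 by blast
    have "\<Psi> (\<zero>\<^bsub>E\<^esub> \<oplus>\<^bsub>E\<^esub> \<zero>\<^bsub>E\<^esub>) = \<Psi> \<zero>\<^bsub>E\<^esub> \<oplus>\<^bsub>E'\<^esub> \<Psi> \<zero>\<^bsub>E\<^esub>" using Padd P00 by blast
    then show "\<Psi> \<zero>\<^bsub>E\<^esub> \<oplus>\<^bsub>E'\<^esub> \<Psi> \<zero>\<^bsub>E\<^esub> = \<Psi> \<zero>\<^bsub>E\<^esub>" by simp
  qed
  define K0 where "K0 = {x \<in> P0. \<Psi> x = \<zero>\<^bsub>E'\<^esub>}"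
  have K0S: "submod S E K0"
    unfolding submod_def
  proof (intro conjI ballI)
    show "K0 \<subseteq> carrier E" unfolding K0_def using P0c by blast
    show "\<zero>\<^bsub>E\<^esub> \<in> K0" unfolding K0_def using P00 Psi0 by blast
  next
    fix v w assume "v \<in> K0" "w \<in> K0"
    then show "v \<oplus>\<^bsub>E\<^esub> w \<in> K0" unfolding K0_def using P0add Padd by simp
  next
    fix v assume "v \<in> K0"
    then show "\<ominus>\<^bsub>E\<^esub> v \<in> K0" unfolding K0_def using P0neg tlin_neg[OF tl P0T] by simp
  next
    fix v s assume v: "v \<in> K0" and s: "s \<in> carrier S"
    have vP: "v \<in> P0" and v0: "\<Psi> v = \<zero>\<^bsub>E'\<^esub>" using v unfolding K0_def by auto
    have vc: "v \<in> carrier E" using P0c vP by blast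
    have vsP: "ract E v s \<in> P0" using submodD(5)[OF P0S vP s] .
    obtain t a where ta: "t \<in> carrier T" "a \<in> A" "s = \<phi> t \<otimes>\<^bsub>S\<^esub> inv\<^bsub>S\<^esub> (\<phi> a)" using S_frac s by blast
    have 1: "ract E (ract E v s) (\<phi> a) = ract E v (\<phi> t)"
      using vc s ta(1,2) by (simp add: E.ract_mult[symmetric] ta(3) frac_times_den)
    have "ract E' (\<Psi> (ract E v s)) a = \<Psi> (ract E (ract E v s) (\<phi> a))" using Pact[OF vsP] ta by simp
    also have "\<dots> = \<Psi> (ract E v (\<phi> t))" by (simp only: 1)
    also have "\<dots> = ract E' (\<Psi> v) t" using Pact[OF vP ta(1)] .
    also have "\<dots> = \<zero>\<^bsub>E'\<^esub>" using v0 ta by simp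
    finally have "\<Psi> (ract E v s) = \<zero>\<^bsub>E'\<^esub>" using torsion_free Pcl[OF vsP] ta(2) by blast
    then show "ract E v s \<in> K0" unfolding K0_def using vsP by blast
  qed
  have inj0: "x = \<zero>\<^bsub>E\<^esub>" if x: "x \<in> P0" "\<Psi> x = \<zero>\<^bsub>E'\<^esub>" for x
  proof (rule ccontr)
    assume ne: "x \<noteq> \<zero>\<^bsub>E\<^esub>"
    have "x \<in> K0" unfolding K0_def using x by blast
    then obtain y where y: "y \<in> K0" "y \<in> \<beta> ` formal_sums V S" "y \<noteq> \<zero>\<^bsub>E\<^esub>"
      using ess_get[OF ess_E K0S _ ne] by blast
    then obtain c where c: "c \<in> formal_sums V S" "y = \<beta> c" by blast
    have "\<beta> c \<in> sat NN" by (rule beta_sat[OF c(1)])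
    then obtain a where a: "a \<in> A" "ract E y (\<phi> a) \<in> NN" unfolding sat_def c(2) by blast
    have yc: "y \<in> carrier E" using c by simp
    have "ract E y (\<phi> a) \<in> K0" using submodD(5)[OF K0S y(1)] a by simp
    then have "\<Psi> (ract E y (\<phi> a)) = \<zero>\<^bsub>E'\<^esub>" unfolding K0_def by blast
    moreover have "\<Psi> (ract E y (\<phi> a)) = h (ract E y (\<phi> a))"
      using ext M(2,5) a(2) by auto
    ultimately have "ract E y (\<phi> a) = \<zero>\<^bsub>E\<^esub>" using h_inj a(2) by simp
    then have "y = \<zero>\<^bsub>E\<^esub>" using E_unit_cancel yc a(1) by blast
    then show False using y(3) by blast
  qed
  have inj: "x = y" if "x \<in> P0" "y \<in> P0" "\<Psi> x = \<Psi> y" for x y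
  proof -
    have "\<Psi> (x \<ominus>\<^bsub>E\<^esub> y) = \<Psi> x \<ominus>\<^bsub>E'\<^esub> \<Psi> y" using tlin_minus[OF tl P0T] that by blast
    also have "\<dots> = \<zero>\<^bsub>E'\<^esub>" unfolding a_minus_def that(3) using Pcl that by (intro E'.M.r_neg) blast
    finally have "x \<ominus>\<^bsub>E\<^esub> y = \<zero>\<^bsub>E\<^esub>" using inj0 E.submod_minus[OF P0S] that by blast
    then show ?thesis using ag_minus_zero[OF E.M.abelian_group_axioms] that P0c by blast
  qed
  define G' where "G' = gen_submod T E' (\<Psi> ` X)"
  have XP0: "X \<subseteq> P0" using M(3) MP0 by blast
  have PX: "\<Psi> ` X \<subseteq> carrier E'" using XP0 Pcl by blast
  have "artinian_submod T E' G'" using LA PX X unfolding locally_artinian_def G'_def by blast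
  then have artG: "\<And>f. (\<forall>n. submod T E' (f n) \<and> f n \<subseteq> G') \<and> (\<forall>n. f (Suc n) \<subseteq> f n) \<Longrightarrow> \<exists>n. \<forall>m\<ge>n. f m = f n"
    unfolding artinian_submod_def by blast
  have G'S: "submod T E' G'" unfolding G'_def by (rule E'.gen_submod_submod[OF PX])
  have XG: "\<Psi> ` X \<subseteq> G'" unfolding G'_def by (rule E'.gen_submod_incl[OF PX])
  define P where "P = {e \<in> P0. \<Psi> e \<in> G'}"
  have PT: "submod T ET P"
  proof (rule tsubI)
    show "P \<subseteq> carrier E" unfolding P_def using P0c by blast
    show "\<zero>\<^bsub>E\<^esub> \<in> P" unfolding P_def using P00 Psi0 submodD(2)[OF G'S] by simp
  next
    fix v w assume "v \<in> P" "w \<in> P"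
    then show "v \<oplus>\<^bsub>E\<^esub> w \<in> P" unfolding P_def using P0add Padd submodD(3)[OF G'S] by simp
  next
    fix v assume "v \<in> P"
    then show "\<ominus>\<^bsub>E\<^esub> v \<in> P" unfolding P_def using P0neg tlin_neg[OF tl P0T] submodD(4)[OF G'S] by simp
  next
    fix v r assume "v \<in> P" "r \<in> carrier T"
    then show "ract E v (\<phi> r) \<in> P" unfolding P_def using P0act Pact submodD(5)[OF G'S] by simp
  qed
  have XP: "X \<subseteq> P" unfolding P_def using XP0 XG by blast
  have genS: "gen_submod S E X \<subseteq> sat P"
    by (rule E.gen_submod_least[OF sat_submod[OF PT]]) (use XP sat_incl[OF PT] in blast)
  define f' where "f' n = \<Psi> ` (f n \<inter> P)" for n
  have f'S: "submod T E' (f' n)" for n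
  proof -
    have fS: "submod S E (f n)" using fch by blast
    have QP0: "f n \<inter> P \<subseteq> P0" unfolding P_def by blast
    note Pc' = tsubD[OF PT]
    show ?thesis unfolding submod_def f'_def
    proof (intro conjI ballI)
      show "\<Psi> ` (f n \<inter> P) \<subseteq> carrier E'" using QP0 Pcl by blast
      have "\<zero>\<^bsub>E\<^esub> \<in> f n \<inter> P" using submodD(2)[OF fS] Pc'(2) by blast
      then show "\<zero>\<^bsub>E'\<^esub> \<in> \<Psi> ` (f n \<inter> P)" using Psi0 by force
    next
      fix v w assume "v \<in> \<Psi> ` (f n \<inter> P)" "w \<in> \<Psi> ` (f n \<inter> P)"
      then obtain x y where xy: "x \<in> f n \<inter> P" "y \<in> f n \<inter> P" "v = \<Psi> x" "w = \<Psi> y" by blast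
      have "x \<oplus>\<^bsub>E\<^esub> y \<in> f n \<inter> P" using xy submodD(3)[OF fS] Pc'(3) by blast
      moreover have "\<Psi> (x \<oplus>\<^bsub>E\<^esub> y) = v \<oplus>\<^bsub>E'\<^esub> w" using Padd xy QP0 by blast
      ultimately show "v \<oplus>\<^bsub>E'\<^esub> w \<in> \<Psi> ` (f n \<inter> P)" by force
    next
      fix v assume "v \<in> \<Psi> ` (f n \<inter> P)"
      then obtain x where xy: "x \<in> f n \<inter> P" "v = \<Psi> x" by blast
      have "\<ominus>\<^bsub>E\<^esub> x \<in> f n \<inter> P" using xy submodD(4)[OF fS] Pc'(4) by blast
      moreover have "\<Psi> (\<ominus>\<^bsub>E\<^esub> x) = \<ominus>\<^bsub>E'\<^esub> v" using tlin_neg[OF tl P0T] xy QP0 by blast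
      ultimately show "\<ominus>\<^bsub>E'\<^esub> v \<in> \<Psi> ` (f n \<inter> P)" by force
    next
      fix v r assume "v \<in> \<Psi> ` (f n \<inter> P)" "r \<in> carrier T"
      then obtain x where xy: "x \<in> f n \<inter> P" "v = \<Psi> x" by blast
      have "ract E x (\<phi> r) \<in> f n \<inter> P" using xy submodD(5)[OF fS] Pc'(5) \<open>r \<in> carrier T\<close> by simp
      moreover have "\<Psi> (ract E x (\<phi> r)) = ract E' v r" using Pact xy QP0 \<open>r \<in> carrier T\<close> by blast
      ultimately show "ract E' v r \<in> \<Psi> ` (f n \<inter> P)" by force
    qed
  qed
  have f'G: "f' n \<subseteq> G'" for n unfolding f'_def P_def by blast
  have f'dec: "f' (Suc n) \<subseteq> f' n" for n unfolding f'_def using fch by blast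
  obtain n0 where n0: "\<forall>m\<ge>n0. f' m = f' n0" using artG[of f'] f'S f'G f'dec by blast
  have fdec: "f m \<subseteq> f n" if "n \<le> m" for m n
    using lift_Suc_antimono_le[of f, OF _ that] fch by blast
  show "\<exists>n. \<forall>m\<ge>n. f m = f n"
  proof (intro exI allI impI)
    fix m assume m: "n0 \<le> m"
    show "f m = f n0"
    proof
      show "f m \<subseteq> f n0" using fdec m by blast
      show "f n0 \<subseteq> f m"
      proof
        fix e assume e: "e \<in> f n0"
        have fS0: "submod S E (f n0)" and fSm: "submod S E (f m)" using fch by blast+
        have "e \<in> sat P" using e fch genS by blast
        then obtain a where a: "e \<in> carrier E" "a \<in> A" "ract E e (\<phi> a) \<in> P" unfolding sat_def by blast
        have "ract E e (\<phi> a) \<in> f n0" using submodD(5)[OF fS0 e] a by simp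
        then have inn0: "\<Psi> (ract E e (\<phi> a)) \<in> f' n0" unfolding f'_def using a by blast
        have fm: "f' m = f' n0" using n0 m by blast
        have "\<Psi> (ract E e (\<phi> a)) \<in> f' m" unfolding fm by (rule inn0)
        then have "\<Psi> (ract E e (\<phi> a)) \<in> \<Psi> ` (f m \<inter> P)" unfolding f'_def .
        then obtain e'' where e''0: "e'' \<in> f m \<inter> P" "\<Psi> (ract E e (\<phi> a)) = \<Psi> e''"
          by (rule imageE)
        then have e'': "e'' \<in> f m" "e'' \<in> P" "\<Psi> e'' = \<Psi> (ract E e (\<phi> a))" by simp_all
        have "e'' = ract E e (\<phi> a)" by (rule inj) (use e'' a in \<open>auto simp: P_def\<close>)
        then have ea: "ract E e (\<phi> a) \<in> f m" using e'' by simp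
        have "e = ract E e (\<phi> a \<otimes>\<^bsub>S\<^esub> inv\<^bsub>S\<^esub> (\<phi> a))" using a by (simp add: inv_r)
        also have "\<dots> = ract E (ract E e (\<phi> a)) (inv\<^bsub>S\<^esub> (\<phi> a))" using a by (simp add: E.ract_mult)
        finally have eq: "e = ract E (ract E e (\<phi> a)) (inv\<^bsub>S\<^esub> (\<phi> a))" .
        have "ract E (ract E e (\<phi> a)) (inv\<^bsub>S\<^esub> (\<phi> a)) \<in> f m"
          by (rule submodD(5)[OF fSm ea]) (use a in simp)
        then show "e \<in> f m" unfolding eq[symmetric] .
      qed
    qed
  qed
qed

end

theorem lemma5p1:
  fixes T :: "'r ring" and A :: "'r set"
    and S :: "'s ring" and \<phi> :: "'r \<Rightarrow> 's"
    and V :: "('r, 'v) module"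
    and E :: "('s, 'e) module" and \<beta> :: "('v \<times> 's \<Rightarrow> int) \<Rightarrow> 'e"
    and E' :: "('r, 'f) module" and g :: "'v \<Rightarrow> 'f"
  assumes "ring T"
    and "right_ore_set T A"
    and "right_ring_of_fractions T A S \<phi>"
    and "right_module T V"
    and "hull_via S (tensor_free T S \<phi> V) E \<beta> (tensor_rel T S \<phi> V)"
    and "\<not> locally_artinian S E"
    and "hull_via T V E' g (torsion T A V)"
  shows "\<not> locally_artinian T E'"
proof
  assume LA: "locally_artinian T E'"
  have st: "setting T A S \<phi> V E \<beta> E' g"
    unfolding setting_def using assms(1,2,3,4,5,7) by blast
  interpret st: setting T A S \<phi> V E \<beta> E' g by (rule st)
  show False using st.main[OF LA] assms(6) by blast
qed

end
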